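(* Let $\mu$ be a minimal, $\sigma$-invariant ergodic probability measure on $\Sigma_N$. Then $x\mapsto r_x$ is constant $\mu$-almost everywhere.
   Context: $S_1,\dots,S_N$ are uniformly expanding compatible substitution rules on compact prototiles $t_1,\dots,t_M\subset\mathbb{R}^d$: each $S_\ell$ consists of maps $f_{ijk}(y)=\theta_\ell y+\tau_{ijk}$ ($1\le k\le\kappa_\ell(i,j)$), $\theta_\ell\in(0,1)$, with $t_i=\bigcup_j\bigcup_kf_{ijk}(t_j)$, pieces meeting along boundaries; substitution matrix $F^{(\ell)}_{ij}=\kappa_\ell(i,j)$; compatibility means supertiles are tiled edge-to-edge so tilings have finite local complexity. $\Sigma_N=\{1,\dots,N\}^{\mathbb{Z}\setminus\{0\}}$ with shift $\sigma$. $\mu$ is minimal if for $\mu$-a.e. $x$ and every $m$ some product $F^{(x_n)}\cdots F^{(x_m)}$, $n>m$, is strictly positive. For such $x$, a level-$k$ supertile of type $i$ is $(\theta_{x_1}\cdots\theta_{x_k})^{-1}t_i$ subdivided by successively applying $S_{x_k},\dots,S_{x_1}$, and $\Omega_x$ is the tiling space of tilings which are increasing unions of such supertiles. $\Lambda_x$ is the set of $\tau$ such that some tiling of $\Omega_x$ contains tiles $t$ and $t+\tau$ that are translates of the same prototile; $r_x$ is the rank of the group $\Gamma_x=\mathbb{Z}[\Lambda_x]$. *)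

theory Defs
  imports "HOL-Probability.Probability"
begin

text \<open>Prototiles are indexed by 1..M, substitution rules by 1..N.
  Parameters: t i (prototile), th l (contraction ratio theta_l),
  ka l i j (number kappa_l(i,j) of copies of t_j in the S_l-subdivision of t_i),
  ta l i j k (translation tau_{ijk} of rule S_l, k < ka l i j).\<close>

definition subst_rules ::
  "nat \<Rightarrow> nat \<Rightarrow> (nat \<Rightarrow> 'a::euclidean_space set) \<Rightarrow> (nat \<Rightarrow> real)
    \<Rightarrow> (nat \<Rightarrow> nat \<Rightarrow> nat \<Rightarrow> nat) \<Rightarrow> (nat \<Rightarrow> nat \<Rightarrow> nat \<Rightarrow> nat \<Rightarrow> 'a) \<Rightarrow> bool" where
  "subst_rules M N t th ka ta \<longleftrightarrow>
     (\<forall>i\<in>{1..M}. compact (t i)) \<and>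
     (\<forall>l\<in>{1..N}. 0 < th l \<and> th l < 1 \<and>
        (\<forall>i\<in>{1..M}. t i = (\<Union>j\<in>{1..M}. \<Union>k\<in>{..<ka l i j}.
                                  (\<lambda>y. th l *\<^sub>R y + ta l i j k) ` t j)) \<and>
        (\<forall>i\<in>{1..M}. \<forall>j\<in>{1..M}. \<forall>j'\<in>{1..M}. \<forall>k<ka l i j. \<forall>k'<ka l i j'.
            (j, k) \<noteq> (j', k') \<longrightarrow>
            interior ((\<lambda>y. th l *\<^sub>R y + ta l i j k) ` t j)
              \<inter> interior ((\<lambda>y. th l *\<^sub>R y + ta l i j' k') ` t j') = {}))"

text \<open>The sequence space Sigma_N = {1..N}^(Z - {0}) with its product sigma-algebra
  (functions are extensional: value undefined at 0).\<close>

definition SigmaM :: "nat \<Rightarrow> (int \<Rightarrow> nat) measure" where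
  "SigmaM N = Pi\<^sub>M (UNIV - {0}) (\<lambda>_. count_space {1..N})"

text \<open>Left shift on Z - {0}: (sigma x)_n = x_{n+1} for n \<noteq> -1, (sigma x)_{-1} = x_1.\<close>

definition shiftS :: "(int \<Rightarrow> nat) \<Rightarrow> (int \<Rightarrow> nat)" where
  "shiftS x = (\<lambda>n. if n = 0 then undefined else x (if n = -1 then 1 else n + 1))"

definition ergodic_shift :: "(int \<Rightarrow> nat) measure \<Rightarrow> bool" where
  "ergodic_shift \<mu> \<longleftrightarrow>
     (\<forall>A\<in>sets \<mu>. shiftS -` A \<inter> space \<mu> = A \<longrightarrow> measure \<mu> A = 0 \<or> measure \<mu> A = 1)"

text \<open>Entries of the matrix product F^(l_1) F^(l_2) ... F^(l_r) for the list [l_1,...,l_r],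
  where F^(l)_{ij} = ka l i j, i,j \<in> {1..M}.\<close>

fun mprod :: "nat \<Rightarrow> (nat \<Rightarrow> nat \<Rightarrow> nat \<Rightarrow> nat) \<Rightarrow> nat list \<Rightarrow> nat \<Rightarrow> nat \<Rightarrow> nat" where
  "mprod M ka [] i j = (if i = j then 1 else 0)"
| "mprod M ka (l # ls) i j = (\<Sum>m\<in>{1..M}. ka l i m * mprod M ka ls m j)"

text \<open>F^(x_n) ... F^(x_m) (indices in Z - {0}, from n down to m).\<close>

definition prod_seg :: "nat \<Rightarrow> (nat \<Rightarrow> nat \<Rightarrow> nat \<Rightarrow> nat) \<Rightarrow> (int \<Rightarrow> nat) \<Rightarrow> int \<Rightarrow> int
    \<Rightarrow> nat \<Rightarrow> nat \<Rightarrow> nat" where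
  "prod_seg M ka x n m = mprod M ka (map x (filter (\<lambda>k. k \<noteq> 0) (rev [m..n])))"

definition minimal_measure :: "nat \<Rightarrow> (nat \<Rightarrow> nat \<Rightarrow> nat \<Rightarrow> nat) \<Rightarrow> (int \<Rightarrow> nat) measure \<Rightarrow> bool" where
  "minimal_measure M ka \<mu> \<longleftrightarrow>
     (AE x in \<mu>. \<forall>m. m \<noteq> 0 \<longrightarrow>
        (\<exists>n. n \<noteq> 0 \<and> n > m \<and> (\<forall>i\<in>{1..M}. \<forall>j\<in>{1..M}. prod_seg M ka x n m i j > 0)))"

text \<open>Theta_k = theta_{x_1} ... theta_{x_k}.\<close>

definition Theta :: "(nat \<Rightarrow> real) \<Rightarrow> (int \<Rightarrow> nat) \<Rightarrow> nat \<Rightarrow> real" where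
  "Theta th x k = (\<Prod>n\<in>{1..k}. th (x (int n)))"

text \<open>Level-k supertile of type i, as a set of labelled tiles (j, v), where (j, v) stands for
  the tile v + t_j. It is Theta_k^{-1} t_i subdivided by S_{x_k}, ..., S_{x_1}.\<close>

primrec supertile :: "nat \<Rightarrow> (nat \<Rightarrow> real) \<Rightarrow> (nat \<Rightarrow> nat \<Rightarrow> nat \<Rightarrow> nat)
    \<Rightarrow> (nat \<Rightarrow> nat \<Rightarrow> nat \<Rightarrow> nat \<Rightarrow> 'a::euclidean_space) \<Rightarrow> (int \<Rightarrow> nat) \<Rightarrow> nat \<Rightarrow> nat
    \<Rightarrow> (nat \<times> 'a) set" where
  "supertile M th ka ta x 0 i = {(i, 0)}"
| "supertile M th ka ta x (Suc k) i =
     (\<Union>j\<in>{1..M}. \<Union>q\<in>{..<ka (x (int (Suc k))) i j}.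
        (\<lambda>(m, v). (m, v + (1 / Theta th x (Suc k)) *\<^sub>R ta (x (int (Suc k))) i j q))
          ` supertile M th ka ta x k j)"

definition translate_patch :: "'a::euclidean_space \<Rightarrow> (nat \<times> 'a) set \<Rightarrow> (nat \<times> 'a) set" where
  "translate_patch w P = (\<lambda>(j, v). (j, v + w)) ` P"

definition tile_set :: "(nat \<Rightarrow> 'a::euclidean_space set) \<Rightarrow> nat \<times> 'a \<Rightarrow> 'a set" where
  "tile_set t jv = (\<lambda>y. snd jv + y) ` t (fst jv)"

text \<open>Compatibility, expressed through its consequence used in the paper: finite local
  complexity of all supertiles (finitely many intersecting pairs of tiles up to translation),
  uniformly over all sequences in Sigma_N.\<close>

definition compatible ::
  "nat \<Rightarrow> nat \<Rightarrow> (nat \<Rightarrow> 'a::euclidean_space set) \<Rightarrow> (nat \<Rightarrow> real)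
    \<Rightarrow> (nat \<Rightarrow> nat \<Rightarrow> nat \<Rightarrow> nat) \<Rightarrow> (nat \<Rightarrow> nat \<Rightarrow> nat \<Rightarrow> nat \<Rightarrow> 'a) \<Rightarrow> bool" where
  "compatible M N t th ka ta \<longleftrightarrow>
     (\<exists>F. finite F \<and>
        (\<forall>x\<in>space (SigmaM N). \<forall>k i. i \<in> {1..M} \<longrightarrow>
          (\<forall>p\<in>supertile M th ka ta x k i. \<forall>p'\<in>supertile M th ka ta x k i.
             tile_set t p \<inter> tile_set t p' \<noteq> {} \<longrightarrow> (fst p, fst p', snd p' - snd p) \<in> F)))"

text \<open>Omega_x: tilings of R^d which are increasing unions of (translated) supertiles.\<close>

definition Omega :: "nat \<Rightarrow> (nat \<Rightarrow> 'a::euclidean_space set) \<Rightarrow> (nat \<Rightarrow> real)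
    \<Rightarrow> (nat \<Rightarrow> nat \<Rightarrow> nat \<Rightarrow> nat) \<Rightarrow> (nat \<Rightarrow> nat \<Rightarrow> nat \<Rightarrow> nat \<Rightarrow> 'a) \<Rightarrow> (int \<Rightarrow> nat)
    \<Rightarrow> (nat \<times> 'a) set set" where
  "Omega M t th ka ta x = {T.
     (\<exists>(typ :: nat \<Rightarrow> nat) (w :: nat \<Rightarrow> 'a).
        (\<forall>k. typ k \<in> {1..M}) \<and>
        (\<forall>k. translate_patch (w k) (supertile M th ka ta x k (typ k))
              \<subseteq> translate_patch (w (Suc k)) (supertile M th ka ta x (Suc k) (typ (Suc k)))) \<and>
        T = (\<Union>k. translate_patch (w k) (supertile M th ka ta x k (typ k)))) \<and>
     (\<Union>p\<in>T. tile_set t p) = UNIV}"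

text \<open>Lambda_x: return vectors between tiles of the same type in some tiling of Omega_x.\<close>

definition Lambda :: "nat \<Rightarrow> (nat \<Rightarrow> 'a::euclidean_space set) \<Rightarrow> (nat \<Rightarrow> real)
    \<Rightarrow> (nat \<Rightarrow> nat \<Rightarrow> nat \<Rightarrow> nat) \<Rightarrow> (nat \<Rightarrow> nat \<Rightarrow> nat \<Rightarrow> nat \<Rightarrow> 'a) \<Rightarrow> (int \<Rightarrow> nat) \<Rightarrow> 'a set" where
  "Lambda M t th ka ta x =
     {u. \<exists>T\<in>Omega M t th ka ta x. \<exists>j v. (j, v) \<in> T \<and> (j, v + u) \<in> T}"

text \<open>Z[S]: the subgroup generated by S (integer linear combinations).\<close>

definition int_span :: "'a::real_vector set \<Rightarrow> 'a set" where
  "int_span S = {\<Sum>s\<in>F. of_int (c s) *\<^sub>R s | F c. finite F \<and> F \<subseteq> S}"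

definition int_indep :: "'a::real_vector set \<Rightarrow> bool" where
  "int_indep S \<longleftrightarrow> (\<forall>c :: 'a \<Rightarrow> int. (\<Sum>s\<in>S. of_int (c s) *\<^sub>R s) = 0 \<longrightarrow> (\<forall>s\<in>S. c s = 0))"

text \<open>Rank of an abelian group G \<subseteq> R^d: sup of sizes of finite Z-independent subsets.\<close>

definition group_rank :: "'a::real_vector set \<Rightarrow> enat" where
  "group_rank G = (SUP S \<in> {S. finite S \<and> S \<subseteq> G \<and> int_indep S}. enat (card S))"

definition rank_x :: "nat \<Rightarrow> (nat \<Rightarrow> 'a::euclidean_space set) \<Rightarrow> (nat \<Rightarrow> real)
    \<Rightarrow> (nat \<Rightarrow> nat \<Rightarrow> nat \<Rightarrow> nat) \<Rightarrow> (nat \<Rightarrow> nat \<Rightarrow> nat \<Rightarrow> nat \<Rightarrow> 'a) \<Rightarrow> (int \<Rightarrow> nat) \<Rightarrow> enat" where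
  "rank_x M t th ka ta x = group_rank (int_span (Lambda M t th ka ta x))"

end

theory Submission
  imports Defs
begin

(* ---- Part1 ---- *)

definition valid :: "nat \<Rightarrow> (int \<Rightarrow> nat) \<Rightarrow> bool" where
  "valid N x \<longleftrightarrow> (\<forall>n. n \<noteq> 0 \<longrightarrow> x n \<in> {1..N})"

lemma space_SigmaM: "space (SigmaM N) = {x. (\<forall>n. n \<noteq> 0 \<longrightarrow> x n \<in> {1..N}) \<and> x 0 = undefined}"
  unfolding SigmaM_def space_PiM PiE_def Pi_def extensional_def by auto

lemma valid_space: "x \<in> space (SigmaM N) \<Longrightarrow> valid N x"
  unfolding space_SigmaM valid_def by auto

lemma Theta_Suc: "Theta th x (Suc k) = Theta th x k * th (x (int (Suc k)))"
  unfolding Theta_def by (simp add: prod.nat_ivl_Suc' mult.commute)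

lemma Theta_0[simp]: "Theta th x 0 = 1"
  unfolding Theta_def by simp

locale TS =
  fixes M N :: nat and t :: "nat \<Rightarrow> 'a::euclidean_space set" and th :: "nat \<Rightarrow> real"
    and ka :: "nat \<Rightarrow> nat \<Rightarrow> nat \<Rightarrow> nat" and ta :: "nat \<Rightarrow> nat \<Rightarrow> nat \<Rightarrow> nat \<Rightarrow> 'a"
  assumes rules: "subst_rules M N t th ka ta"
begin

abbreviation ST where "ST x k i \<equiv> supertile M th ka ta x k i"

lemma rules_l: "l \<in> {1..N} \<Longrightarrow> 0 < th l \<and> th l < 1 \<and>
        (\<forall>i\<in>{1..M}. t i = (\<Union>j\<in>{1..M}. \<Union>k\<in>{..<ka l i j}.
                                  (\<lambda>y. th l *\<^sub>R y + ta l i j k) ` t j))"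
  using rules unfolding subst_rules_def by blast

lemma th_pos: "l \<in> {1..N} \<Longrightarrow> 0 < th l" and th_lt1: "l \<in> {1..N} \<Longrightarrow> th l < 1"
  using rules_l by auto

lemma t_eq: "l \<in> {1..N} \<Longrightarrow> i \<in> {1..M} \<Longrightarrow>
   t i = (\<Union>j\<in>{1..M}. \<Union>k\<in>{..<ka l i j}. (\<lambda>y. th l *\<^sub>R y + ta l i j k) ` t j)"
  using rules_l by blast

lemma t_compact: "i \<in> {1..M} \<Longrightarrow> compact (t i)"
  using rules unfolding subst_rules_def by blast

lemma Theta_pos: "valid N x \<Longrightarrow> 0 < Theta th x k"
  unfolding Theta_def valid_def by (intro prod_pos) (auto intro!: th_pos)

lemma ST_types: "i \<in> {1..M} \<Longrightarrow> p \<in> ST x k i \<Longrightarrow> fst p \<in> {1..M}"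
proof (induction k arbitrary: i p)
  case 0 then show ?case by simp
next
  case (Suc k)
  from Suc.prems(2) obtain j q p' where "j \<in> {1..M}" "p' \<in> ST x k j"
    "p = (\<lambda>(m, v). (m, v + (1 / Theta th x (Suc k)) *\<^sub>R ta (x (int (Suc k))) i j q)) p'"
    by (simp only: supertile.simps) blast
  then show ?case using Suc.IH[of j p'] by (cases p') simp
qed

lemma ST_finite: "finite (ST x k i)"
  by (induction k arbitrary: i) (simp_all only: supertile.simps finite_UN finite_atLeastAtMost finite_lessThan finite_imageI finite.intros, blast)

lemma tile_set_shift: "tile_set t ((\<lambda>(m, v). (m, v + c)) p) = (+) c ` tile_set t p"
  by (cases p) (auto simp: tile_set_def image_image add_ac)

lemma tile_union_shift: "(\<Union>p\<in>(\<lambda>(m, v). (m, v + c)) ` S. tile_set t p) = (+) c ` (\<Union>p\<in>S. tile_set t p)"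
  by (simp add: image_UN tile_set_shift)

lemma region_ST:
  assumes "valid N x" "i \<in> {1..M}"
  shows "(\<Union>p\<in>ST x k i. tile_set t p) = (*\<^sub>R) (1 / Theta th x k) ` t i"
  using assms(2)
proof (induction k arbitrary: i)
  case 0 then show ?case by (simp add: tile_set_def)
next
  case (Suc k)
  let ?l = "x (int (Suc k))"
  have l: "?l \<in> {1..N}" using assms(1) unfolding valid_def by auto
  have T: "Theta th x (Suc k) = Theta th x k * th ?l" by (rule Theta_Suc)
  have pos: "0 < Theta th x k" "0 < th ?l" using Theta_pos[OF assms(1)] th_pos[OF l] by auto
  have "(\<Union>p\<in>ST x (Suc k) i. tile_set t p) =
     (\<Union>j\<in>{1..M}. \<Union>q\<in>{..<ka ?l i j}. (+) ((1 / Theta th x (Suc k)) *\<^sub>R ta ?l i j q) `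
          (\<Union>p\<in>ST x k j. tile_set t p))"
    by (simp only: supertile.simps UN_UN_flatten tile_union_shift)
  also have "\<dots> = (\<Union>j\<in>{1..M}. \<Union>q\<in>{..<ka ?l i j}. (+) ((1 / Theta th x (Suc k)) *\<^sub>R ta ?l i j q) `
          ((*\<^sub>R) (1 / Theta th x k) ` t j))"
    using Suc.IH by auto
  also have "\<dots> = (*\<^sub>R) (1 / Theta th x (Suc k)) ` (\<Union>j\<in>{1..M}. \<Union>q\<in>{..<ka ?l i j}. (\<lambda>y. th ?l *\<^sub>R y + ta ?l i j q) ` t j)"
  proof -
    have "(+) ((1 / Theta th x (Suc k)) *\<^sub>R ta ?l i j q) ` ((*\<^sub>R) (1 / Theta th x k) ` t j)
        = (*\<^sub>R) (1 / Theta th x (Suc k)) ` ((\<lambda>y. th ?l *\<^sub>R y + ta ?l i j q) ` t j)" for j q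
    proof -
      have e: "(1 / Theta th x (Suc k)) * th ?l = 1 / Theta th x k" using pos by (simp add: T)
      have "(1 / Theta th x (Suc k)) *\<^sub>R ta ?l i j q + (1 / Theta th x k) *\<^sub>R y
            = (1 / Theta th x (Suc k)) *\<^sub>R (th ?l *\<^sub>R y + ta ?l i j q)" for y
        by (simp only: scaleR_add_right scaleR_scaleR e add.commute)
      then show ?thesis by (simp add: image_image)
    qed
    then show ?thesis by (simp add: image_UN)
  qed
  also have "\<dots> = (*\<^sub>R) (1 / Theta th x (Suc k)) ` t i"
    using t_eq[OF l Suc.prems] by simp
  finally show ?case .
qed

end

(* ---- Part2 ---- *)

lemma translate_patch_add: "translate_patch a (translate_patch b P) = translate_patch (b + a) P"
  unfolding translate_patch_def by (force simp: image_image add.assoc)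

lemma translate_patch_mono: "P \<subseteq> Q \<Longrightarrow> translate_patch a P \<subseteq> translate_patch a Q"
  unfolding translate_patch_def by (rule image_mono)

lemma translate_patch_0[simp]: "translate_patch 0 P = P"
  unfolding translate_patch_def by (force simp: image_iff)

context TS begin

definition child where
  "child x l a b d \<longleftrightarrow> a \<in> {1..M} \<and>
     (\<exists>q < ka (x (int (Suc l))) b a. d = (1 / Theta th x (Suc l)) *\<^sub>R ta (x (int (Suc l))) b a q)"

definition chain where
  "chain x k n \<tau> \<delta> \<longleftrightarrow> (\<forall>l. k \<le> l \<and> l \<le> n \<longrightarrow> \<tau> l \<in> {1..M}) \<and>
      (\<forall>l. k \<le> l \<and> l < n \<longrightarrow> child x l (\<tau> l) (\<tau> (Suc l)) (\<delta> l))"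

definition off :: "(nat \<Rightarrow> 'a) \<Rightarrow> nat \<Rightarrow> nat \<Rightarrow> 'a" where
  "off \<delta> k n = (\<Sum>l\<in>{k..<n}. \<delta> l)"

lemma child_sub:
  assumes "child x l a b d"
  shows "translate_patch d (ST x l a) \<subseteq> ST x (Suc l) b"
proof -
  from assms obtain q where a: "a \<in> {1..M}" and q: "q < ka (x (int (Suc l))) b a"
    and d: "d = (1 / Theta th x (Suc l)) *\<^sub>R ta (x (int (Suc l))) b a q"
    unfolding child_def by blast
  have "translate_patch d (ST x l a) = (\<lambda>(m, v). (m, v + (1 / Theta th x (Suc l)) *\<^sub>R ta (x (int (Suc l))) b a q)) ` ST x l a"
    unfolding translate_patch_def d ..
  also have "\<dots> \<subseteq> ST x (Suc l) b"
    unfolding supertile.simps using a q by blast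
  finally show ?thesis .
qed

lemma child_region:
  assumes x: "valid N x" and b: "b \<in> {1..M}" and c: "child x l a b d"
  shows "(+) d ` ((*\<^sub>R) (1 / Theta th x l) ` t a) \<subseteq> (*\<^sub>R) (1 / Theta th x (Suc l)) ` t b"
proof
  fix z assume "z \<in> (+) d ` ((*\<^sub>R) (1 / Theta th x l) ` t a)"
  then obtain y where y: "y \<in> t a" and z: "z = d + (1 / Theta th x l) *\<^sub>R y" by auto
  let ?l = "x (int (Suc l))"
  from c obtain q where a: "a \<in> {1..M}" and q: "q < ka ?l b a"
    and d: "d = (1 / Theta th x (Suc l)) *\<^sub>R ta ?l b a q"
    unfolding child_def by blast
  have l: "?l \<in> {1..N}" using x unfolding valid_def by auto
  have pos: "0 < Theta th x l" "0 < th ?l" using Theta_pos[OF x] th_pos[OF l] by auto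
  have e: "(1 / Theta th x (Suc l)) * th ?l = 1 / Theta th x l" using pos by (simp add: Theta_Suc)
  have "z = (1 / Theta th x (Suc l)) *\<^sub>R (th ?l *\<^sub>R y + ta ?l b a q)"
    unfolding z d by (simp only: scaleR_add_right scaleR_scaleR e add.commute)
  moreover have "th ?l *\<^sub>R y + ta ?l b a q \<in> t b"
    using t_eq[OF l b] y a q by blast
  ultimately show "z \<in> (*\<^sub>R) (1 / Theta th x (Suc l)) ` t b" by blast
qed

lemma off_Suc: "k \<le> n \<Longrightarrow> off \<delta> k (Suc n) = off \<delta> k n + \<delta> n"
  unfolding off_def by simp

lemma off_same[simp]: "off \<delta> k k = 0"
  unfolding off_def by simp

lemma chain_region:
  assumes x: "valid N x" and c: "chain x k n \<tau> \<delta>" and kn: "k \<le> n"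
  shows "(+) (off \<delta> k n) ` ((*\<^sub>R) (1 / Theta th x k) ` t (\<tau> k)) \<subseteq> (*\<^sub>R) (1 / Theta th x n) ` t (\<tau> n)"
  using kn c
proof (induction n rule: dec_induct)
  case base then show ?case by simp
next
  case (step n)
  have c1: "chain x k n \<tau> \<delta>" using step.prems unfolding chain_def by auto
  have ch: "child x n (\<tau> n) (\<tau> (Suc n)) (\<delta> n)" and b: "\<tau> (Suc n) \<in> {1..M}"
    using step.prems step.hyps unfolding chain_def by auto
  show ?case
  proof
    fix z assume "z \<in> (+) (off \<delta> k (Suc n)) ` (*\<^sub>R) (1 / Theta th x k) ` t (\<tau> k)"
    then obtain y where y: "y \<in> (*\<^sub>R) (1 / Theta th x k) ` t (\<tau> k)" and z: "z = off \<delta> k (Suc n) + y" by blast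
    have "off \<delta> k n + y \<in> (*\<^sub>R) (1 / Theta th x n) ` t (\<tau> n)" using step.IH[OF c1] y by blast
    then have "\<delta> n + (off \<delta> k n + y) \<in> (*\<^sub>R) (1 / Theta th x (Suc n)) ` t (\<tau> (Suc n))"
      using child_region[OF x b ch] by blast
    then show "z \<in> (*\<^sub>R) (1 / Theta th x (Suc n)) ` t (\<tau> (Suc n))"
      using z off_Suc[OF step.hyps(1)] by (simp add: add_ac)
  qed
qed

lemma chain_sub:
  assumes c: "chain x k n \<tau> \<delta>" and kn: "k \<le> n"
  shows "translate_patch (off \<delta> k n) (ST x k (\<tau> k)) \<subseteq> ST x n (\<tau> n)"
  using kn c
proof (induction n rule: dec_induct)
  case base then show ?case by simp
next
  case (step n)
  have c1: "chain x k n \<tau> \<delta>" using step.prems unfolding chain_def by auto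
  have ch: "child x n (\<tau> n) (\<tau> (Suc n)) (\<delta> n)"
    using step.prems step.hyps unfolding chain_def by auto
  have "translate_patch (off \<delta> k (Suc n)) (ST x k (\<tau> k))
      = translate_patch (\<delta> n) (translate_patch (off \<delta> k n) (ST x k (\<tau> k)))"
    using off_Suc[OF step.hyps(1)] by (simp add: translate_patch_add)
  also have "\<dots> \<subseteq> translate_patch (\<delta> n) (ST x n (\<tau> n))"
    by (rule translate_patch_mono[OF step.IH[OF c1]])
  also have "\<dots> \<subseteq> ST x (Suc n) (\<tau> (Suc n))" by (rule child_sub[OF ch])
  finally show ?case .
qed

lemma chain_glue:
  assumes c1: "chain x a b \<tau>1 \<delta>1" and c2: "chain x b c \<tau>2 \<delta>2" and e: "\<tau>1 b = \<tau>2 b"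
  shows "chain x a c (\<lambda>l. if l < b then \<tau>1 l else \<tau>2 l) (\<lambda>l. if l < b then \<delta>1 l else \<delta>2 l)"
  unfolding chain_def
proof (intro conjI allI impI)
  fix l assume "a \<le> l \<and> l \<le> c"
  then show "(if l < b then \<tau>1 l else \<tau>2 l) \<in> {1..M}"
    using c1 c2 unfolding chain_def by auto
next
  fix l assume l: "a \<le> l \<and> l < c"
  show "child x l (if l < b then \<tau>1 l else \<tau>2 l) (if Suc l < b then \<tau>1 (Suc l) else \<tau>2 (Suc l))
          (if l < b then \<delta>1 l else \<delta>2 l)"
  proof (cases "l < b")
    case True
    then have "(if Suc l < b then \<tau>1 (Suc l) else \<tau>2 (Suc l)) = \<tau>1 (Suc l)"
      using e True by (cases "Suc l = b") auto
    then show ?thesis using True c1 l unfolding chain_def by auto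
  next
    case False
    then show ?thesis using c2 l unfolding chain_def by auto
  qed
qed

lemma off_glue:
  assumes "a \<le> b" "b \<le> c"
  shows "off (\<lambda>l. if l < b then \<delta>1 l else \<delta>2 l) a c = off \<delta>1 a b + off \<delta>2 b c"
proof -
  have "off (\<lambda>l. if l < b then \<delta>1 l else \<delta>2 l) a c
     = (\<Sum>l\<in>{a..<b}. if l < b then \<delta>1 l else \<delta>2 l) + (\<Sum>l\<in>{b..<c}. if l < b then \<delta>1 l else \<delta>2 l)"
    unfolding off_def sum.atLeastLessThan_concat[OF assms, symmetric] ..
  also have "\<dots> = off \<delta>1 a b + off \<delta>2 b c"
    unfolding off_def by (intro arg_cong2[where f="(+)"] sum.cong) auto
  finally show ?thesis .
qed

lemma mprod_pos_split:
  assumes "0 < mprod M ka (l # ls) b a"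
  shows "\<exists>m\<in>{1..M}. 0 < ka l b m \<and> 0 < mprod M ka ls m a"
proof (rule ccontr)
  assume "\<not> ?thesis"
  then have "\<forall>m\<in>{1..M}. ka l b m * mprod M ka ls m a = 0" by auto
  then have "(\<Sum>m\<in>{1..M}. ka l b m * mprod M ka ls m a) = 0"
    by (intro sum.neutral) blast
  then show False using assms by (simp only: mprod.simps less_irrefl)
qed

lemma rev_upt_Suc: "rev [Suc k..<Suc (k + Suc d)] = Suc (k + d) # rev [Suc k..<Suc (k + d)]"
  by simp

lemma chain_of_mprod:
  assumes x: "valid N x" and a: "a \<in> {1..M}"
  shows "b \<in> {1..M} \<Longrightarrow> 0 < mprod M ka (map (\<lambda>l. x (int l)) (rev [Suc k..<Suc (k + d)])) b a \<Longrightarrow>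
    \<exists>\<tau> \<delta>. chain x k (k + d) \<tau> \<delta> \<and> \<tau> k = a \<and> \<tau> (k + d) = b"
proof (induction d arbitrary: b)
  case 0
  then have "a = b" by (simp split: if_splits)
  then show ?case using a by (intro exI[of _ "\<lambda>_. a"]) (auto simp: chain_def)
next
  case (Suc d)
  let ?l = "x (int (Suc (k + d)))"
  from Suc.prems(2) have "0 < mprod M ka (?l # map (\<lambda>l. x (int l)) (rev [Suc k..<Suc (k + d)])) b a"
    by (simp only: rev_upt_Suc list.map)
  from mprod_pos_split[OF this] obtain m where m: "m \<in> {1..M}" "0 < ka ?l b m"
    and mp: "0 < mprod M ka (map (\<lambda>l. x (int l)) (rev [Suc k..<Suc (k + d)])) m a" by blast
  from Suc.IH[OF m(1) mp] obtain \<tau> \<delta> where c: "chain x k (k + d) \<tau> \<delta>" "\<tau> k = a" "\<tau> (k + d) = m"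
    by blast
  define \<tau>' where "\<tau>' = \<tau>(Suc (k + d) := b)"
  define \<delta>' where "\<delta>' = \<delta>(k + d := (1 / Theta th x (Suc (k + d))) *\<^sub>R ta ?l b m 0)"
  have ch: "child x (k + d) m b (\<delta>' (k + d))"
    unfolding child_def \<delta>'_def using m by auto
  have "chain x k (k + Suc d) \<tau>' \<delta>'"
    unfolding chain_def
  proof (intro conjI allI impI)
    fix l assume "k \<le> l \<and> l \<le> k + Suc d"
    then show "\<tau>' l \<in> {1..M}" using c(1) Suc.prems(1) unfolding chain_def \<tau>'_def by auto
  next
    fix l assume l: "k \<le> l \<and> l < k + Suc d"
    show "child x l (\<tau>' l) (\<tau>' (Suc l)) (\<delta>' l)"
    proof (cases "l = k + d")
      case True then show ?thesis using ch c(3) unfolding \<tau>'_def by simp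
    next
      case False
      then have lt: "l < k + d" using l by auto
      then have "child x l (\<tau> l) (\<tau> (Suc l)) (\<delta> l)" using c(1) l unfolding chain_def by auto
      moreover have "\<tau>' l = \<tau> l" "\<tau>' (Suc l) = \<tau> (Suc l)" "\<delta>' l = \<delta> l"
        using lt unfolding \<tau>'_def \<delta>'_def by auto
      ultimately show ?thesis by simp
    qed
  qed
  moreover have "\<tau>' k = a" "\<tau>' (k + Suc d) = b" using c unfolding \<tau>'_def by auto
  ultimately show ?case by blast
qed

lemma chain_of_point:
  assumes x: "valid N x"
  shows "j \<in> {1..M} \<Longrightarrow> c \<in> (*\<^sub>R) (1 / Theta th x (k + d)) ` t j \<Longrightarrow>
    \<exists>\<tau> \<delta>. chain x k (k + d) \<tau> \<delta> \<and> \<tau> (k + d) = j \<and>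
       c \<in> (+) (off \<delta> k (k + d)) ` ((*\<^sub>R) (1 / Theta th x k) ` t (\<tau> k))"
proof (induction d arbitrary: j c)
  case 0
  then show ?case by (intro exI[of _ "\<lambda>_. j"]) (auto simp: chain_def)
next
  case (Suc d)
  let ?l = "x (int (Suc (k + d)))"
  have l: "?l \<in> {1..N}" using x unfolding valid_def by auto
  from Suc.prems(2) obtain y where y: "y \<in> t j" and cy: "c = (1 / Theta th x (Suc (k + d))) *\<^sub>R y" by auto
  from y t_eq[OF l Suc.prems(1)] obtain m q y' where m: "m \<in> {1..M}" and q: "q < ka ?l j m"
    and y': "y' \<in> t m" and yy: "y = th ?l *\<^sub>R y' + ta ?l j m q" by blast
  have pos: "0 < Theta th x (k + d)" "0 < th ?l" using Theta_pos[OF x] th_pos[OF l] by auto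
  have e: "(1 / Theta th x (Suc (k + d))) * th ?l = 1 / Theta th x (k + d)" using pos by (simp add: Theta_Suc)
  define d0 where "d0 = (1 / Theta th x (Suc (k + d))) *\<^sub>R ta ?l j m q"
  define c' where "c' = (1 / Theta th x (k + d)) *\<^sub>R y'"
  have "c = ((1 / Theta th x (Suc (k + d))) * th ?l) *\<^sub>R y' + d0" unfolding cy yy d0_def
    by (simp only: scaleR_add_right scaleR_scaleR)
  then have "c = (1 / Theta th x (k + d)) *\<^sub>R y' + d0" by (simp only: e)
  then have cc: "c = d0 + c'" unfolding c'_def by (simp only: add.commute)
  have "c' \<in> (*\<^sub>R) (1 / Theta th x (k + d)) ` t m" using y' unfolding c'_def by blast
  from Suc.IH[OF m this] obtain \<tau> \<delta> where c: "chain x k (k + d) \<tau> \<delta>" "\<tau> (k + d) = m"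
    and cin: "c' \<in> (+) (off \<delta> k (k + d)) ` (*\<^sub>R) (1 / Theta th x k) ` t (\<tau> k)" by blast
  define \<tau>' where "\<tau>' = \<tau>(Suc (k + d) := j)"
  define \<delta>' where "\<delta>' = \<delta>(k + d := d0)"
  have ch: "child x (k + d) m j (\<delta>' (k + d))"
    unfolding child_def \<delta>'_def d0_def using m q by auto
  have "chain x k (k + Suc d) \<tau>' \<delta>'"
    unfolding chain_def
  proof (intro conjI allI impI)
    fix l assume "k \<le> l \<and> l \<le> k + Suc d"
    then show "\<tau>' l \<in> {1..M}" using c(1) Suc.prems(1) unfolding chain_def \<tau>'_def by auto
  next
    fix l assume l: "k \<le> l \<and> l < k + Suc d"
    show "child x l (\<tau>' l) (\<tau>' (Suc l)) (\<delta>' l)"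
    proof (cases "l = k + d")
      case True then show ?thesis using ch c(2) unfolding \<tau>'_def by simp
    next
      case False
      then have lt: "l < k + d" using l by auto
      then have "child x l (\<tau> l) (\<tau> (Suc l)) (\<delta> l)" using c(1) l unfolding chain_def by auto
      moreover have "\<tau>' l = \<tau> l" "\<tau>' (Suc l) = \<tau> (Suc l)" "\<delta>' l = \<delta> l"
        using lt unfolding \<tau>'_def \<delta>'_def by auto
      ultimately show ?thesis by simp
    qed
  qed
  moreover have "\<tau>' (k + Suc d) = j" unfolding \<tau>'_def by simp
  moreover have "off \<delta>' k (k + Suc d) = off \<delta> k (k + d) + d0"
  proof -
    have "off \<delta>' k (k + Suc d) = off \<delta>' k (k + d) + \<delta>' (k + d)"
      using off_Suc[of k "k + d" \<delta>'] by simp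
    moreover have "off \<delta>' k (k + d) = off \<delta> k (k + d)"
      unfolding off_def \<delta>'_def by (intro sum.cong) auto
    ultimately show ?thesis unfolding \<delta>'_def by simp
  qed
  moreover have "\<tau>' k = \<tau> k" unfolding \<tau>'_def by simp
  ultimately show ?case using cin cc
    by (intro exI[of _ \<tau>'] exI[of _ \<delta>']) (force simp: add_ac)
qed

end

(* ---- Part3 ---- *)

lemma upto_int_nat: "[int a..int b] = map int [a..<Suc b]"
proof (induction b)
  case 0 then show ?case by (cases a) auto
next
  case (Suc b)
  show ?case
  proof (cases "a \<le> Suc b")
    case True
    have "[int a..int (Suc b)] = [int a..int (Suc b) - 1] @ [int (Suc b)]"
      using True by (intro upto_rec2) simp
    also have "int (Suc b) - 1 = int b" by simp
    finally show ?thesis using Suc.IH True by simp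
  next
    case False then show ?thesis by simp
  qed
qed

lemma prod_seg_conv:
  "prod_seg M ka x (int n) (int (Suc k)) = mprod M ka (map (\<lambda>l. x (int l)) (rev [Suc k..<Suc n]))"
proof -
  have "filter (\<lambda>k. k \<noteq> 0) (rev [int (Suc k)..int n]) = map int (rev [Suc k..<Suc n])"
    unfolding upto_int_nat rev_map by (auto simp: filter_map o_def intro!: filter_True)
  then show ?thesis unfolding prod_seg_def by (simp add: o_def)
qed

context TS begin

definition npos where
  "npos x \<longleftrightarrow> (\<forall>k. \<exists>d. \<forall>i\<in>{1..M}. \<forall>j\<in>{1..M}.
     0 < mprod M ka (map (\<lambda>l. x (int l)) (rev [Suc k..<Suc (k + d)])) i j)"

lemma npos_of_minimal:
  assumes "\<forall>m. m \<noteq> 0 \<longrightarrow> (\<exists>n. n \<noteq> 0 \<and> n > m \<and> (\<forall>i\<in>{1..M}. \<forall>j\<in>{1..M}. prod_seg M ka x n m i j > 0))"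
  shows "npos x"
  unfolding npos_def
proof
  fix k
  from assms[rule_format, of "int (Suc k)"] obtain n where n: "n > int (Suc k)"
    and p: "\<forall>i\<in>{1..M}. \<forall>j\<in>{1..M}. prod_seg M ka x n (int (Suc k)) i j > 0" by auto
  define n' where "n' = nat n"
  have n': "n = int n'" using n unfolding n'_def by simp
  define d where "d = n' - k"
  have nd: "n' = k + d" using n n' unfolding d_def by simp
  show "\<exists>d. \<forall>i\<in>{1..M}. \<forall>j\<in>{1..M}. 0 < mprod M ka (map (\<lambda>l. x (int l)) (rev [Suc k..<Suc (k + d)])) i j"
    apply (rule exI[of _ d])
    using p unfolding n' nd prod_seg_conv .
qed

definition Ret :: "(nat \<times> 'a) set \<Rightarrow> 'a set" where
  "Ret P = {u. \<exists>j v. (j, v) \<in> P \<and> (j, v + u) \<in> P}"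

lemma Ret_translate: "Ret (translate_patch w P) = Ret P"
proof -
  have "(j, v) \<in> translate_patch w P \<longleftrightarrow> (j, v - w) \<in> P" for j v
    unfolding translate_patch_def by (force simp: image_iff)
  note mem = this
  show ?thesis
  proof
    show "Ret (translate_patch w P) \<subseteq> Ret P"
    proof
      fix u assume "u \<in> Ret (translate_patch w P)"
      then obtain j v where "(j, v) \<in> translate_patch w P" "(j, v + u) \<in> translate_patch w P"
        unfolding Ret_def by blast
      then have "(j, v - w) \<in> P" "(j, (v - w) + u) \<in> P" unfolding mem by (simp_all add: algebra_simps)
      then show "u \<in> Ret P" unfolding Ret_def by blast
    qed
  next
    show "Ret P \<subseteq> Ret (translate_patch w P)"
    proof
      fix u assume "u \<in> Ret P"
      then obtain j v where "(j, v) \<in> P" "(j, v + u) \<in> P"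
        unfolding Ret_def by blast
      then have "(j, v + w) \<in> translate_patch w P" "(j, (v + w) + u) \<in> translate_patch w P"
        unfolding mem by (simp_all add: algebra_simps)
      then show "u \<in> Ret (translate_patch w P)" unfolding Ret_def by blast
    qed
  qed
qed

lemma Ret_mono: "P \<subseteq> Q \<Longrightarrow> Ret P \<subseteq> Ret Q"
  unfolding Ret_def by blast

definition Rx where "Rx x = (\<Union>k. \<Union>i\<in>{1..M}. Ret (ST x k i))"

lemma Lambda_eq_Ret: "Lambda M t th ka ta x = (\<Union>T\<in>Omega M t th ka ta x. Ret T)"
  unfolding Lambda_def Ret_def by blast

lemma Ret_Omega:
  assumes x: "valid N x" and np: "npos x" and T: "T \<in> Omega M t th ka ta x"
  shows "Ret T = Rx x"
proof -
  from T obtain tp w where tp: "\<forall>k. tp k \<in> {1..M}"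
    and nest: "\<forall>k. translate_patch (w k) (ST x k (tp k)) \<subseteq> translate_patch (w (Suc k)) (ST x (Suc k) (tp (Suc k)))"
    and TT: "T = (\<Union>k. translate_patch (w k) (ST x k (tp k)))"
    unfolding Omega_def by blast
  define P where "P k = translate_patch (w k) (ST x k (tp k))" for k
  have mono: "P k \<subseteq> P k'" if "k \<le> k'" for k k'
  proof (rule lift_Suc_mono_le[of P, OF _ that])
    show "P n \<subseteq> P (Suc n)" for n using nest unfolding P_def by blast
  qed
  show ?thesis
  proof
    show "Ret T \<subseteq> Rx x"
    proof
      fix u assume "u \<in> Ret T"
      then obtain j v k1 k2 where "(j, v) \<in> P k1" "(j, v + u) \<in> P k2"
        unfolding Ret_def TT P_def by blast
      then have "(j, v) \<in> P (max k1 k2)" "(j, v + u) \<in> P (max k1 k2)"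
        using mono[of k1 "max k1 k2"] mono[of k2 "max k1 k2"] by auto
      then have "u \<in> Ret (P (max k1 k2))" unfolding Ret_def by blast
      then show "u \<in> Rx x" unfolding P_def Ret_translate Rx_def using tp by blast
    qed
  next
    show "Rx x \<subseteq> Ret T"
    proof
      fix u assume "u \<in> Rx x"
      then obtain k i where i: "i \<in> {1..M}" and u: "u \<in> Ret (ST x k i)" unfolding Rx_def by blast
      from np obtain d where d: "\<forall>i\<in>{1..M}. \<forall>j\<in>{1..M}.
          0 < mprod M ka (map (\<lambda>l. x (int l)) (rev [Suc k..<Suc (k + d)])) i j"
        unfolding npos_def by blast
      from chain_of_mprod[OF x i tp[rule_format, of "k + d"]] d i tp
      obtain \<tau> \<delta> where c: "chain x k (k + d) \<tau> \<delta>" "\<tau> k = i" "\<tau> (k + d) = tp (k + d)" by blast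
      have "translate_patch (off \<delta> k (k + d)) (ST x k i) \<subseteq> ST x (k + d) (tp (k + d))"
        using chain_sub[OF c(1)] c(2,3) by simp
      then have "translate_patch (w (k + d)) (translate_patch (off \<delta> k (k + d)) (ST x k i)) \<subseteq> P (k + d)"
        unfolding P_def by (rule translate_patch_mono)
      also have "P (k + d) \<subseteq> T" unfolding TT P_def by blast
      finally have "Ret (translate_patch (w (k + d)) (translate_patch (off \<delta> k (k + d)) (ST x k i))) \<subseteq> Ret T"
        by (rule Ret_mono)
      then show "u \<in> Ret T" unfolding Ret_translate using u by blast
    qed
  qed
qed

lemma Lambda_eq_Rx:
  assumes x: "valid N x" and np: "npos x" and ne: "Omega M t th ka ta x \<noteq> {}"
  shows "Lambda M t th ka ta x = Rx x"
proof -
  have "(\<Union>T\<in>Omega M t th ka ta x. Ret T) = (\<Union>T\<in>Omega M t th ka ta x. Rx x)"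
    using Ret_Omega[OF x np] by (intro SUP_cong) simp_all
  also have "\<dots> = Rx x" using ne by simp
  finally show ?thesis unfolding Lambda_eq_Ret .
qed

end

(* ---- Part4 ---- *)

context TS begin

lemma Theta_le_pow:
  assumes x: "valid N x"
  shows "\<exists>q. 0 < q \<and> q < 1 \<and> (\<forall>k. Theta th x k \<le> q ^ k)"
proof -
  have x1: "x 1 \<in> {1..N}" using x unfolding valid_def by auto
  then have ne: "th ` {1..N} \<noteq> {}" by auto
  define q where "q = Max (th ` {1..N})"
  have qin: "q \<in> th ` {1..N}" unfolding q_def using ne by (intro Max_in) auto
  have ge: "th l \<le> q" if "l \<in> {1..N}" for l unfolding q_def using that by (intro Max_ge) auto
  have "0 < q" "q < 1" using qin th_pos th_lt1 by auto
  moreover have "Theta th x k \<le> q ^ k" for k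
  proof -
    have "Theta th x k \<le> (\<Prod>n\<in>{1..k}. q)" unfolding Theta_def
      using x unfolding valid_def by (intro prod_mono) (auto intro!: ge less_imp_le[OF th_pos])
    then show ?thesis by simp
  qed
  ultimately show ?thesis by blast
qed

lemma Theta_small:
  assumes x: "valid N x" and eta: "0 < \<eta>"
  shows "\<exists>n\<ge>k0. Theta th x n \<le> \<eta>"
proof -
  obtain q where q: "0 < q" "q < 1" "\<forall>k. Theta th x k \<le> q ^ k" using Theta_le_pow[OF x] by blast
  obtain n where n: "q ^ n < \<eta>" using real_arch_pow_inv[OF eta q(2)] by blast
  have "Theta th x (max n k0) \<le> q ^ (max n k0)" using q by blast
  also have "\<dots> \<le> q ^ n" using q by (intro power_decreasing) auto
  finally show ?thesis using n by (intro exI[of _ "max n k0"]) auto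
qed

lemma norm_region:
  assumes x: "valid N x" and D: "\<forall>j\<in>{1..M}. t j \<subseteq> cball 0 D" and j: "j \<in> {1..M}"
    and z: "z \<in> (*\<^sub>R) (1 / Theta th x k) ` t j"
  shows "norm z \<le> D / Theta th x k"
proof -
  from z obtain y where y: "y \<in> t j" "z = (1 / Theta th x k) *\<^sub>R y" by blast
  have "y \<in> cball 0 D" using D j y by blast
  then have "norm y \<le> D" by simp
  moreover have pos: "0 < Theta th x k" using Theta_pos[OF x] .
  ultimately show ?thesis using y(2) by (simp add: divide_right_mono)
qed

lemma seg_exists:
  assumes x: "valid N x" and np: "npos x" and j0: "j0 \<in> {1..M}" and ep: "0 < \<epsilon>"
    and ball: "cball a \<epsilon> \<subseteq> t j0" and D: "\<forall>j\<in>{1..M}. t j \<subseteq> cball 0 D" and i: "i \<in> {1..M}"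
  shows "\<exists>n \<tau> \<delta>. k < n \<and> chain x k n \<tau> \<delta> \<and> \<tau> k = i \<and> \<tau> n = j0 \<and>
    (\<forall>y\<in>(+) (off \<delta> k n) ` ((*\<^sub>R) (1 / Theta th x k) ` t i).
        cball y R \<subseteq> (*\<^sub>R) (1 / Theta th x n) ` t j0)"
proof -
  from np obtain d1 where d1: "\<forall>i\<in>{1..M}. \<forall>j\<in>{1..M}.
      0 < mprod M ka (map (\<lambda>l. x (int l)) (rev [Suc k..<Suc (k + d1)])) i j"
    unfolding npos_def by blast
  define k' where "k' = k + d1"
  define C where "C = max 1 (R + 2 * D / Theta th x k')"
  have C: "0 < C" "R + 2 * D / Theta th x k' \<le> C" unfolding C_def by auto
  obtain n where n: "n \<ge> Suc k'" "Theta th x n \<le> \<epsilon> / C"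
    using Theta_small[OF x, of "\<epsilon> / C" "Suc k'"] ep C by auto
  have Tn: "0 < Theta th x n" using Theta_pos[OF x] .
  have Tk': "0 < Theta th x k'" using Theta_pos[OF x] .
  have CE: "C \<le> \<epsilon> / Theta th x n"
    using n(2) Tn C ep by (simp add: field_simps)
  define d2 where "d2 = n - k'"
  have nd: "n = k' + d2" using n unfolding d2_def by simp
  define c where "c = (1 / Theta th x n) *\<^sub>R a"
  have "a \<in> t j0" using ball ep by auto
  then have "c \<in> (*\<^sub>R) (1 / Theta th x (k' + d2)) ` t j0" unfolding c_def nd by blast
  from chain_of_point[OF x j0 this] obtain \<tau>2 \<delta>2 where c2: "chain x k' n \<tau>2 \<delta>2" "\<tau>2 n = j0"
    and cin: "c \<in> (+) (off \<delta>2 k' n) ` ((*\<^sub>R) (1 / Theta th x k') ` t (\<tau>2 k'))"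
    unfolding nd by blast
  define i' where "i' = \<tau>2 k'"
  have i': "i' \<in> {1..M}" using c2(1) n unfolding chain_def i'_def by auto
  from chain_of_mprod[OF x i i'] d1 i i' obtain \<tau>1 \<delta>1 where
    c1: "chain x k k' \<tau>1 \<delta>1" "\<tau>1 k = i" "\<tau>1 k' = i'" unfolding k'_def by blast
  define \<tau> where "\<tau> = (\<lambda>l. if l < k' then \<tau>1 l else \<tau>2 l)"
  define \<delta> where "\<delta> = (\<lambda>l. if l < k' then \<delta>1 l else \<delta>2 l)"
  have ch: "chain x k n \<tau> \<delta>" unfolding \<tau>_def \<delta>_def
    by (rule chain_glue[OF c1(1) c2(1)]) (simp add: c1(3) i'_def)
  have tk: "\<tau> k = i"
  proof (cases "k < k'")
    case True then show ?thesis using c1 unfolding \<tau>_def by simp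
  next
    case False then have "k = k'" unfolding k'_def by simp
    then show ?thesis using c1 unfolding \<tau>_def i'_def by simp
  qed
  have tn: "\<tau> n = j0" using c2 n unfolding \<tau>_def by simp
  have offe: "off \<delta> k n = off \<delta>1 k k' + off \<delta>2 k' n"
    unfolding \<delta>_def by (rule off_glue) (use n in \<open>auto simp: k'_def\<close>)
  have depth: "cball y R \<subseteq> (*\<^sub>R) (1 / Theta th x n) ` t j0"
    if y: "y \<in> (+) (off \<delta> k n) ` ((*\<^sub>R) (1 / Theta th x k) ` t i)" for y
  proof
    fix p assume p: "p \<in> cball y R"
    from y obtain z where z: "z \<in> (*\<^sub>R) (1 / Theta th x k) ` t i" and yz: "y = off \<delta> k n + z" by blast
    have "off \<delta>1 k k' + z \<in> (*\<^sub>R) (1 / Theta th x k') ` t i'"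
      using chain_region[OF x c1(1)] c1(2,3) z unfolding k'_def by auto
    then have n1: "norm (off \<delta>1 k k' + z) \<le> D / Theta th x k'" using norm_region[OF x D i'] by blast
    from cin obtain z2 where z2: "z2 \<in> (*\<^sub>R) (1 / Theta th x k') ` t i'" and cz: "c = off \<delta>2 k' n + z2"
      unfolding i'_def by blast
    have n2: "norm z2 \<le> D / Theta th x k'" using norm_region[OF x D i' z2] .
    have "y - c = (off \<delta>1 k k' + z) - z2" unfolding yz cz offe by (simp add: algebra_simps)
    then have "norm (y - c) \<le> D / Theta th x k' + D / Theta th x k'"
      using norm_triangle_ineq4[of "off \<delta>1 k k' + z" z2] n1 n2 by simp
    moreover have "norm (p - y) \<le> R" using p by (simp add: dist_norm norm_minus_commute)
    ultimately have "norm (p - c) \<le> R + 2 * D / Theta th x k'"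
      using norm_triangle_ineq[of "p - y" "y - c"] by simp
    then have pc: "norm (p - c) \<le> \<epsilon> / Theta th x n" using C CE by linarith
    have "norm (Theta th x n *\<^sub>R p - a) = Theta th x n * norm (p - c)"
    proof -
      have "Theta th x n *\<^sub>R p - a = Theta th x n *\<^sub>R (p - c)"
        unfolding c_def using Tn by (simp add: algebra_simps)
      then show ?thesis using Tn by simp
    qed
    also have "\<dots> \<le> \<epsilon>" using pc Tn by (simp add: field_simps)
    finally have "Theta th x n *\<^sub>R p \<in> t j0" using ball by (auto simp: dist_norm norm_minus_commute)
    moreover have "p = (1 / Theta th x n) *\<^sub>R (Theta th x n *\<^sub>R p)" using Tn by simp
    ultimately show "p \<in> (*\<^sub>R) (1 / Theta th x n) ` t j0" by blast
  qed
  show ?thesis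
    using n ch tk tn depth unfolding k'_def by (intro exI[of _ n] exI[of _ \<tau>] exI[of _ \<delta>]) auto
qed

end

(* ---- Part5 ---- *)

context TS begin

definition segP where
  "segP x j0 k R s \<longleftrightarrow> (case s of (n, \<tau>, \<delta>) \<Rightarrow> k < n \<and> chain x k n \<tau> \<delta> \<and> \<tau> k = j0 \<and> \<tau> n = j0 \<and>
    (\<forall>y\<in>(+) (off \<delta> k n) ` ((*\<^sub>R) (1 / Theta th x k) ` t j0).
        cball y R \<subseteq> (*\<^sub>R) (1 / Theta th x n) ` t j0))"

definition seg where "seg x j0 k R = (SOME s. segP x j0 k R s)"

primrec build :: "(int \<Rightarrow> nat) \<Rightarrow> nat \<Rightarrow> nat \<Rightarrow> nat \<times> (nat \<Rightarrow> nat) \<times> (nat \<Rightarrow> 'a)" where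
  "build x j0 0 = (0, \<lambda>_. j0, \<lambda>_. 0)"
| "build x j0 (Suc m) = (case build x j0 m of (k, \<tau>, \<delta>) \<Rightarrow> (case seg x j0 k (real m) of (n, \<tau>', \<delta>') \<Rightarrow>
      (n, \<lambda>l. if l < k then \<tau> l else \<tau>' l, \<lambda>l. if l < k then \<delta> l else \<delta>' l)))"

lemma chain_cong:
  assumes "chain x k n \<tau> \<delta>" "\<And>l. k \<le> l \<Longrightarrow> l \<le> n \<Longrightarrow> \<tau>2 l = \<tau> l" "\<And>l. k \<le> l \<Longrightarrow> l < n \<Longrightarrow> \<delta>2 l = \<delta> l"
  shows "chain x k n \<tau>2 \<delta>2"
  using assms unfolding chain_def by (metis Suc_leI le_Suc_eq less_imp_le)

lemma chain_le: "chain x k n \<tau> \<delta> \<Longrightarrow> n' \<le> n \<Longrightarrow> chain x k n' \<tau> \<delta>"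
  unfolding chain_def by auto

lemma off_cong: "(\<And>l. k \<le> l \<Longrightarrow> l < n \<Longrightarrow> \<delta>2 l = \<delta> l) \<Longrightarrow> off \<delta>2 k n = off \<delta> k n"
  unfolding off_def by (intro sum.cong) auto

lemma tile_union_translate:
  "(\<Union>p\<in>translate_patch w P. tile_set t p) = (+) w ` (\<Union>p\<in>P. tile_set t p)"
  unfolding translate_patch_def by (rule tile_union_shift)

lemma Omega_nonempty:
  assumes x: "valid N x" and np: "npos x" and j0: "j0 \<in> {1..M}" and ep: "0 < \<epsilon>"
    and ball: "cball a \<epsilon> \<subseteq> t j0" and D: "\<forall>j\<in>{1..M}. t j \<subseteq> cball 0 D"
  shows "Omega M t th ka ta x \<noteq> {}"
proof -
  have segP: "segP x j0 k R (seg x j0 k R)" for k R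
  proof -
    from seg_exists[OF x np j0 ep ball D j0, of k R] have "\<exists>s. segP x j0 k R s"
      unfolding segP_def by auto
    then show ?thesis unfolding seg_def by (rule someI_ex)
  qed
  define K where "K m = fst (build x j0 m)" for m
  define Tau where "Tau m = fst (snd (build x j0 m))" for m
  define Del where "Del m = snd (snd (build x j0 m))" for m
  have stp: "K m < K (Suc m) \<and> Tau (Suc m) (K m) = j0 \<and> Tau (Suc m) (K (Suc m)) = j0 \<and>
      (\<forall>l<K m. Tau (Suc m) l = Tau m l \<and> Del (Suc m) l = Del m l) \<and>
      (chain x 0 (K m) (Tau m) (Del m) \<and> Tau m (K m) = j0 \<longrightarrow> chain x 0 (K (Suc m)) (Tau (Suc m)) (Del (Suc m))) \<and>
      (\<forall>y\<in>(+) (off (Del (Suc m)) (K m) (K (Suc m))) ` ((*\<^sub>R) (1 / Theta th x (K m)) ` t j0).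
        cball y (real m) \<subseteq> (*\<^sub>R) (1 / Theta th x (K (Suc m))) ` t j0)" for m
  proof -
    obtain k \<tau> \<delta> where b: "build x j0 m = (k, \<tau>, \<delta>)" by (cases "build x j0 m") auto
    obtain n \<tau>' \<delta>' where s: "seg x j0 k (real m) = (n, \<tau>', \<delta>')" by (cases "seg x j0 k (real m)") auto
    have P: "segP x j0 k (real m) (n, \<tau>', \<delta>')" using segP[of k "real m"] unfolding s .
    then have kn: "k < n" and c': "chain x k n \<tau>' \<delta>'" and t'k: "\<tau>' k = j0" and t'n: "\<tau>' n = j0"
      and dp: "\<forall>y\<in>(+) (off \<delta>' k n) ` ((*\<^sub>R) (1 / Theta th x k) ` t j0).
        cball y (real m) \<subseteq> (*\<^sub>R) (1 / Theta th x n) ` t j0"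
      unfolding segP_def by auto
    have bs: "build x j0 (Suc m) = (n, \<lambda>l. if l < k then \<tau> l else \<tau>' l, \<lambda>l. if l < k then \<delta> l else \<delta>' l)"
      by (simp add: b s)
    have K: "K m = k" "K (Suc m) = n" unfolding K_def using b bs by simp_all
    have Tm: "Tau m = \<tau>" "Del m = \<delta>" unfolding Tau_def Del_def using b by simp_all
    have Ts: "Tau (Suc m) = (\<lambda>l. if l < k then \<tau> l else \<tau>' l)" "Del (Suc m) = (\<lambda>l. if l < k then \<delta> l else \<delta>' l)"
      unfolding Tau_def Del_def using bs by simp_all
    have offe: "off (Del (Suc m)) (K m) (K (Suc m)) = off \<delta>' k n"
      unfolding K Ts by (rule off_cong) simp
    show ?thesis
    proof (intro conjI impI)
      show "K m < K (Suc m)" using kn K by simp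
      show "Tau (Suc m) (K m) = j0" using t'k K Ts by simp
      show "Tau (Suc m) (K (Suc m)) = j0" using t'n K Ts kn by simp
      show "\<forall>l<K m. Tau (Suc m) l = Tau m l \<and> Del (Suc m) l = Del m l" using K Ts Tm by simp
      assume "chain x 0 (K m) (Tau m) (Del m) \<and> Tau m (K m) = j0"
      then have "chain x 0 k \<tau> \<delta>" "\<tau> k = j0" using K Tm by simp_all
      from chain_glue[OF this(1) c'] this(2) t'k
      show "chain x 0 (K (Suc m)) (Tau (Suc m)) (Del (Suc m))" unfolding K Ts by simp
    next
      show "\<forall>y\<in>(+) (off (Del (Suc m)) (K m) (K (Suc m))) ` ((*\<^sub>R) (1 / Theta th x (K m)) ` t j0).
        cball y (real m) \<subseteq> (*\<^sub>R) (1 / Theta th x (K (Suc m))) ` t j0"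
        unfolding offe using dp K by simp
    qed
  qed
  have K0: "K 0 = 0" and T0: "Tau 0 = (\<lambda>_. j0)" unfolding K_def Tau_def by simp_all
  have inv: "chain x 0 (K m) (Tau m) (Del m) \<and> Tau m (K m) = j0" for m
  proof (induction m)
    case 0 then show ?case using K0 T0 j0 unfolding chain_def by simp
  next
    case (Suc m) then show ?case using stp[of m] by blast
  qed
  have Kge: "m \<le> K m" for m
  proof (induction m)
    case 0 then show ?case by simp
  next
    case (Suc m) then show ?case using stp[of m] by linarith
  qed
  have Kstep: "K m < K (Suc m)" for m using stp[of m] by blast
  have Kmono: "K m \<le> K m'" if "m \<le> m'" for m m'
    by (rule lift_Suc_mono_le[of K, OF _ that]) (use Kstep in \<open>simp add: less_imp_le\<close>)
  have agree: "Tau m' l = Tau m l \<and> Del m' l = Del m l" if "m \<le> m'" "l < K m" for m m' l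
    using that(1)
  proof (induction m' rule: dec_induct)
    case base then show ?case by simp
  next
    case (step m')
    have "l < K m'" using that(2) Kmono[OF step.hyps(1)] by linarith
    moreover have "\<forall>l<K m'. Tau (Suc m') l = Tau m' l \<and> Del (Suc m') l = Del m' l"
      using stp[of m'] by blast
    ultimately show ?case using step.IH by simp
  qed
  define \<tau>i where "\<tau>i l = Tau (Suc l) l" for l
  define \<delta>i where "\<delta>i l = Del (Suc l) l" for l
  have lim: "\<tau>i l = Tau m l \<and> \<delta>i l = Del m l" if "l < K m" for l m
  proof -
    have "l < K (Suc l)" using Kge[of "Suc l"] by simp
    then have "Tau (max m (Suc l)) l = Tau (Suc l) l \<and> Del (max m (Suc l)) l = Del (Suc l) l"
      by (intro agree) auto
    moreover have "Tau (max m (Suc l)) l = Tau m l \<and> Del (max m (Suc l)) l = Del m l"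
      using that by (intro agree) auto
    ultimately show ?thesis unfolding \<tau>i_def \<delta>i_def by simp
  qed
  have chi: "chain x 0 n \<tau>i \<delta>i" for n
  proof -
    have "n < K (Suc n)" using Kge[of "Suc n"] by simp
    have "chain x 0 n (Tau (Suc n)) (Del (Suc n))"
      using chain_le[OF conjunct1[OF inv[of "Suc n"]] less_imp_le[OF \<open>n < K (Suc n)\<close>]] .
    then show ?thesis
      by (rule chain_cong) (use lim \<open>n < K (Suc n)\<close> in auto)
  qed
  have tpM: "\<tau>i l \<in> {1..M}" for l using chi[of l] unfolding chain_def by blast
  have tK: "\<tau>i (K m) = j0" for m
    using lim[of "K m" "Suc m"] Kstep[of m] stp[of m] by simp
  have offK: "off \<delta>i (K m) (K (Suc m)) = off (Del (Suc m)) (K m) (K (Suc m))" for m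
    by (rule off_cong) (use lim in auto)
  define w where "w l = - off \<delta>i 0 l" for l
  define T where "T = (\<Union>l. translate_patch (w l) (ST x l (\<tau>i l)))"
  have nest: "translate_patch (w l) (ST x l (\<tau>i l)) \<subseteq> translate_patch (w (Suc l)) (ST x (Suc l) (\<tau>i (Suc l)))" for l
  proof -
    have ch: "child x l (\<tau>i l) (\<tau>i (Suc l)) (\<delta>i l)" using chi[of "Suc l"] unfolding chain_def by auto
    have "w l = \<delta>i l + w (Suc l)" unfolding w_def using off_Suc[of 0 l \<delta>i] by simp
    then have "translate_patch (w l) (ST x l (\<tau>i l)) = translate_patch (w (Suc l)) (translate_patch (\<delta>i l) (ST x l (\<tau>i l)))"
      by (simp add: translate_patch_add)
    also have "\<dots> \<subseteq> translate_patch (w (Suc l)) (ST x (Suc l) (\<tau>i (Suc l)))"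
      by (rule translate_patch_mono[OF child_sub[OF ch]])
    finally show ?thesis .
  qed
  define Reg where "Reg m = (+) (w (K m)) ` ((*\<^sub>R) (1 / Theta th x (K m)) ` t j0)" for m
  have regT: "Reg m \<subseteq> (\<Union>p\<in>T. tile_set t p)" for m
  proof -
    have "(\<Union>p\<in>T. tile_set t p) = (\<Union>l. \<Union>p\<in>translate_patch (w l) (ST x l (\<tau>i l)). tile_set t p)"
      unfolding T_def by (simp only: UN_UN_flatten)
    also have "\<dots> = (\<Union>l. (+) (w l) ` ((*\<^sub>R) (1 / Theta th x l) ` t (\<tau>i l)))"
      by (simp only: tile_union_translate region_ST[OF x tpM])
    finally show ?thesis unfolding Reg_def using tK[of m] by blast
  qed
  have regstep: "cball y (real m) \<subseteq> Reg (Suc m)" if y: "y \<in> Reg m" for y m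
  proof -
    from y obtain z where z: "z \<in> (*\<^sub>R) (1 / Theta th x (K m)) ` t j0" and yz: "y = w (K m) + z"
      unfolding Reg_def by blast
    have "off \<delta>i 0 (K (Suc m)) = off \<delta>i 0 (K m) + off \<delta>i (K m) (K (Suc m))"
      unfolding off_def using Kstep[of m] by (intro sum.atLeastLessThan_concat[symmetric]) auto
    then have wK: "w (K m) = w (K (Suc m)) + off (Del (Suc m)) (K m) (K (Suc m))"
      unfolding w_def offK by (simp add: algebra_simps)
    define y' where "y' = off (Del (Suc m)) (K m) (K (Suc m)) + z"
    have yy: "y = w (K (Suc m)) + y'" unfolding yz wK y'_def by (simp add: algebra_simps)
    have "y' \<in> (+) (off (Del (Suc m)) (K m) (K (Suc m))) ` ((*\<^sub>R) (1 / Theta th x (K m)) ` t j0)"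
      unfolding y'_def using z by blast
    then have "cball y' (real m) \<subseteq> (*\<^sub>R) (1 / Theta th x (K (Suc m))) ` t j0"
      using stp[of m] by blast
    then have "(+) (w (K (Suc m))) ` cball y' (real m) \<subseteq> Reg (Suc m)"
      unfolding Reg_def by (rule image_mono)
    then show ?thesis unfolding yy cball_translation .
  qed
  have "a \<in> t j0" using ball ep by auto
  define z0 where "z0 = w (K 0) + (1 / Theta th x (K 0)) *\<^sub>R a"
  have z0m: "z0 \<in> Reg m" for m
  proof (induction m)
    case 0 then show ?case unfolding Reg_def z0_def using \<open>a \<in> t j0\<close> by blast
  next
    case (Suc m)
    then show ?case using regstep[OF Suc] by auto
  qed
  have cover: "(\<Union>p\<in>T. tile_set t p) = UNIV"
  proof (intro set_eqI iffI)
    fix p :: 'a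
    define m where "m = nat \<lceil>dist z0 p\<rceil>"
    have "dist z0 p \<le> real m" unfolding m_def by linarith
    then have "p \<in> cball z0 (real m)" by simp
    then have "p \<in> Reg (Suc m)" using regstep[OF z0m[of m]] by blast
    then show "p \<in> (\<Union>p\<in>T. tile_set t p)" using regT by blast
  qed simp
  have "T \<in> Omega M t th ka ta x"
    unfolding Omega_def mem_Collect_eq
  proof (intro conjI exI)
    show "\<forall>k. \<tau>i k \<in> {1..M}" using tpM by blast
    show "\<forall>k. translate_patch (w k) (ST x k (\<tau>i k)) \<subseteq> translate_patch (w (Suc k)) (ST x (Suc k) (\<tau>i (Suc k)))"
      using nest by blast
    show "T = (\<Union>k. translate_patch (w k) (ST x k (\<tau>i k)))" unfolding T_def ..
    show "(\<Union>p\<in>T. tile_set t p) = UNIV" by (rule cover)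
  qed
  then show ?thesis by blast
qed
end

(* ---- Erg ---- *)

lemma ergodic_const:
  fixes g :: "(int \<Rightarrow> nat) \<Rightarrow> enat" and \<mu> :: "(int \<Rightarrow> nat) measure"
  assumes prob: "prob_space \<mu>"
    and shift_meas: "shiftS \<in> \<mu> \<rightarrow>\<^sub>M \<mu>"
    and invariant: "distr \<mu> \<mu> shiftS = \<mu>"
    and ergodic: "ergodic_shift \<mu>"
    and meas: "\<And>c::nat. {x\<in>space \<mu>. enat c \<le> g x} \<in> sets \<mu>"
    and mono: "\<And>x. x \<in> space \<mu> \<Longrightarrow> g (shiftS x) \<le> g x"
  shows "\<exists>r. AE x in \<mu>. g x = r"
proof -
  interpret P: prob_space \<mu> by (rule prob)
  have sp: "shiftS x \<in> space \<mu>" if "x \<in> space \<mu>" for x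
    using measurable_space[OF shift_meas that] .
  have spn: "(shiftS ^^ n) x \<in> space \<mu>" if "x \<in> space \<mu>" for x n
  proof (induction n)
    case 0 then show ?case using that by simp
  next
    case (Suc n) then show ?case using sp[OF Suc] by simp
  qed
  have pres: "measure \<mu> (shiftS -` B \<inter> space \<mu>) = measure \<mu> B" if "B \<in> sets \<mu>" for B
    using measure_distr[OF shift_meas that] invariant by simp
  define E where "E c = {x\<in>space \<mu>. enat c \<le> g x}" for c :: nat
  have E01: "measure \<mu> (E c) = 0 \<or> measure \<mu> (E c) = 1" for c
  proof -
    define A where "A n = {x\<in>space \<mu>. enat c \<le> g ((shiftS ^^ n) x)}" for n
    have AS: "A (Suc n) = shiftS -` A n \<inter> space \<mu>" for n
      unfolding A_def by (auto simp: funpow_swap1 sp)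
    have Asets: "A n \<in> sets \<mu>" for n
    proof (induction n)
      case 0 then show ?case using meas[of c] unfolding A_def by simp
    next
      case (Suc n) then show ?case unfolding AS by (rule measurable_sets[OF shift_meas])
    qed
    have Ameas: "measure \<mu> (A n) = measure \<mu> (A 0)" for n
    proof (induction n)
      case 0 then show ?case by simp
    next
      case (Suc n) then show ?case unfolding AS using pres[OF Asets[of n]] by simp
    qed
    have dec: "A (Suc n) \<subseteq> A n" for n
    proof
      fix x assume "x \<in> A (Suc n)"
      then have x: "x \<in> space \<mu>" and c: "enat c \<le> g (shiftS ((shiftS ^^ n) x))" unfolding A_def by auto
      have "g (shiftS ((shiftS ^^ n) x)) \<le> g ((shiftS ^^ n) x)" using mono[OF spn[OF x]] .
      then show "x \<in> A n" using x c unfolding A_def by auto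
    qed
    then have decs: "decseq A" by (rule decseq_SucI)
    define B where "B = (\<Inter>n. A n)"
    have Bsets: "B \<in> sets \<mu>" unfolding B_def using Asets by blast
    have "(\<lambda>n. measure \<mu> (A n)) \<longlonglongrightarrow> measure \<mu> B"
      unfolding B_def using Asets decs by (intro P.finite_Lim_measure_decseq) auto
    moreover have "(\<lambda>n. measure \<mu> (A n)) \<longlonglongrightarrow> measure \<mu> (A 0)"
    proof -
      have "(\<lambda>n. measure \<mu> (A n)) = (\<lambda>n. measure \<mu> (A 0))" by (rule ext) (rule Ameas)
      then show ?thesis by simp
    qed
    ultimately have mB: "measure \<mu> B = measure \<mu> (A 0)" using LIMSEQ_unique by blast
    have Binv: "shiftS -` B \<inter> space \<mu> = B"
    proof (intro set_eqI iffI)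
      fix x assume x: "x \<in> shiftS -` B \<inter> space \<mu>"
      then have "x \<in> A (Suc n)" for n unfolding B_def AS by auto
      moreover have "x \<in> A 0" using \<open>\<And>n. x \<in> A (Suc n)\<close>[of 0] dec[of 0] by blast
      ultimately have "x \<in> A n" for n by (cases n) auto
      then show "x \<in> B" unfolding B_def by blast
    next
      fix x assume "x \<in> B"
      then have "x \<in> A (Suc n)" for n unfolding B_def by blast
      then show "x \<in> shiftS -` B \<inter> space \<mu>" unfolding B_def AS by blast
    qed
    have "measure \<mu> B = 0 \<or> measure \<mu> B = 1"
      using ergodic Bsets Binv unfolding ergodic_shift_def by blast
    moreover have "A 0 = E c" unfolding A_def E_def by simp
    ultimately show ?thesis using mB by simp
  qed
  have Esets: "E c \<in> sets \<mu>" for c unfolding E_def by (rule meas)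
  have E0: "measure \<mu> (E 0) = 1" unfolding E_def using P.prob_space by (simp add: zero_enat_def[symmetric])
  have Emono: "E c' \<subseteq> E c" if "c \<le> c'" for c c' unfolding E_def using that
    by (auto intro: order.trans[of _ "enat c'"])
  show ?thesis
  proof (cases "\<forall>c. measure \<mu> (E c) = 1")
    case True
    then have "AE x in \<mu>. x \<in> E c" for c by (intro P.AE_prob_1) simp
    then have "AE x in \<mu>. \<forall>c. x \<in> E c" by (simp add: AE_all_countable)
    then have "AE x in \<mu>. g x = \<infinity>"
    proof eventually_elim
      case (elim x)
      then have "\<forall>c. x \<in> E c" by blast
      then have "\<forall>c. enat c \<le> g x" unfolding E_def by blast
      then show "g x = \<infinity>"
      proof (cases "g x")
        case (enat k)
        then have "enat (Suc k) \<le> enat k" using \<open>\<forall>c. enat c \<le> g x\<close> by metis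
        then show ?thesis by simp
      qed simp
    qed
    then show ?thesis by blast
  next
    case False
    have "\<exists>c. measure \<mu> (E c) \<noteq> 1" using False by blast
    then obtain r where r: "measure \<mu> (E r) \<noteq> 1" and rmin: "\<And>k. k < r \<Longrightarrow> \<not> measure \<mu> (E k) \<noteq> 1"
      unfolding exists_least_iff[of "\<lambda>c. measure \<mu> (E c) \<noteq> 1"] by blast
    have r0: "r \<noteq> 0"
    proof
      assume "r = 0" then show False using r E0 by simp
    qed
    have r1: "measure \<mu> (E (r - 1)) = 1" using rmin[of "r - 1"] r0 by simp
    have "measure \<mu> (E r) = 0" using E01[of r] r by blast
    then have a1: "AE x in \<mu>. x \<notin> E r" using P.prob_eq_0[OF Esets] by simp
    have a2: "AE x in \<mu>. x \<in> E (r - 1)" using r1 by (intro P.AE_prob_1) simp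
    have "AE x in \<mu>. g x = enat (r - 1)"
      using a1 a2
    proof eventually_elim
      case (elim x)
      then have "enat (r - 1) \<le> g x" "\<not> enat r \<le> g x" "x \<in> space \<mu>" unfolding E_def by auto
      then show ?case
      proof (cases "g x")
        case (enat k)
        then show ?thesis using elim r0 \<open>enat (r - 1) \<le> g x\<close> \<open>\<not> enat r \<le> g x\<close> by simp
      qed simp
    qed
    then show ?thesis by blast
  qed
qed


(* ---- Part6 ---- *)

lemma int_span_mono: "A \<subseteq> B \<Longrightarrow> int_span A \<subseteq> int_span B"
  unfolding int_span_def by blast

lemma int_span_scale:
  fixes c :: real and A :: "'a::real_vector set"
  assumes c: "c \<noteq> 0"
  shows "(*\<^sub>R) c ` int_span A \<subseteq> int_span ((*\<^sub>R) c ` A)"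
proof
  fix y assume "y \<in> (*\<^sub>R) c ` int_span A"
  then obtain F cf where F: "finite F" "F \<subseteq> A" and y: "y = c *\<^sub>R (\<Sum>s\<in>F. of_int (cf s) *\<^sub>R s)"
    unfolding int_span_def by blast
  have inj: "inj_on ((*\<^sub>R) c) F" using c by (auto intro: inj_onI)
  define cf' where "cf' b = cf ((1 / c) *\<^sub>R b)" for b
  have "(\<Sum>b\<in>(*\<^sub>R) c ` F. of_int (cf' b) *\<^sub>R b) = (\<Sum>s\<in>F. of_int (cf' (c *\<^sub>R s)) *\<^sub>R (c *\<^sub>R s))"
    by (rule sum.reindex[OF inj, unfolded o_def])
  also have "\<dots> = (\<Sum>s\<in>F. of_int (cf s) *\<^sub>R (c *\<^sub>R s))"
    unfolding cf'_def using c by simp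
  also have "\<dots> = y" unfolding y scaleR_sum_right by (simp add: ac_simps)
  finally show "y \<in> int_span ((*\<^sub>R) c ` A)"
    unfolding int_span_def using F by blast
qed

lemma int_indep_scale:
  fixes c :: real and S :: "'a::real_vector set"
  assumes c: "c \<noteq> 0" and S: "int_indep S"
  shows "int_indep ((*\<^sub>R) c ` S)"
  unfolding int_indep_def
proof (intro allI impI ballI)
  fix cf :: "'a \<Rightarrow> int" and b
  assume sum0: "(\<Sum>s\<in>(*\<^sub>R) c ` S. of_int (cf s) *\<^sub>R s) = 0" and b: "b \<in> (*\<^sub>R) c ` S"
  have inj: "inj_on ((*\<^sub>R) c) S" using c by (auto intro: inj_onI)
  have "(\<Sum>s\<in>(*\<^sub>R) c ` S. of_int (cf s) *\<^sub>R s) = (\<Sum>s\<in>S. of_int (cf (c *\<^sub>R s)) *\<^sub>R (c *\<^sub>R s))"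
    by (rule sum.reindex[OF inj, unfolded o_def])
  also have "\<dots> = c *\<^sub>R (\<Sum>s\<in>S. of_int (cf (c *\<^sub>R s)) *\<^sub>R s)"
    unfolding scaleR_sum_right by (simp add: ac_simps)
  finally have "(\<Sum>s\<in>S. of_int (cf (c *\<^sub>R s)) *\<^sub>R s) = 0" using sum0 c by simp
  then have "\<forall>s\<in>S. cf (c *\<^sub>R s) = 0"
    using spec[OF S[unfolded int_indep_def], of "\<lambda>s. cf (c *\<^sub>R s)"] by blast
  then show "cf b = 0" using b by blast
qed

lemma rank_scale:
  fixes c :: real and A B :: "'a::real_vector set"
  assumes c: "c \<noteq> 0" and AB: "(*\<^sub>R) c ` A \<subseteq> B"
  shows "group_rank (int_span A) \<le> group_rank (int_span B)"
  unfolding group_rank_def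
proof (rule SUP_mono)
  fix S assume "S \<in> {S. finite S \<and> S \<subseteq> int_span A \<and> int_indep S}"
  then have S: "finite S" "S \<subseteq> int_span A" "int_indep S" by auto
  have inj: "inj_on ((*\<^sub>R) c) S" using c by (auto intro: inj_onI)
  have "(*\<^sub>R) c ` S \<subseteq> (*\<^sub>R) c ` int_span A" using S by blast
  also have "\<dots> \<subseteq> int_span ((*\<^sub>R) c ` A)" by (rule int_span_scale[OF c])
  also have "\<dots> \<subseteq> int_span B" by (rule int_span_mono[OF AB])
  finally have "(*\<^sub>R) c ` S \<in> {S. finite S \<and> S \<subseteq> int_span B \<and> int_indep S}"
    using S int_indep_scale[OF c S(3)] by auto
  moreover have "enat (card S) \<le> enat (card ((*\<^sub>R) c ` S))" using card_image[OF inj] by simp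
  ultimately show "\<exists>m\<in>{S. finite S \<and> S \<subseteq> int_span B \<and> int_indep S}. enat (card S) \<le> enat (card m)"
    by blast
qed

lemma rank_ge_iff:
  "enat c \<le> group_rank G \<longleftrightarrow> (\<exists>S. finite S \<and> S \<subseteq> G \<and> int_indep S \<and> c \<le> card S)"
proof
  assume "\<exists>S. finite S \<and> S \<subseteq> G \<and> int_indep S \<and> c \<le> card S"
  then obtain S where S: "finite S" "S \<subseteq> G" "int_indep S" "c \<le> card S" by blast
  have "enat (card S) \<le> group_rank G" unfolding group_rank_def using S by (intro SUP_upper) auto
  then show "enat c \<le> group_rank G" using S(4) by (meson enat_ord_simps(1) order.trans)
next
  assume a: "enat c \<le> group_rank G"
  show "\<exists>S. finite S \<and> S \<subseteq> G \<and> int_indep S \<and> c \<le> card S"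
  proof (cases c)
    case 0 then show ?thesis by (intro exI[of _ "{}"]) (auto simp: int_indep_def)
  next
    case (Suc c')
    then have "enat c' < group_rank G" using a by (metis Suc_ile_eq)
    then obtain S where "S \<in> {S. finite S \<and> S \<subseteq> G \<and> int_indep S}" "enat c' < enat (card S)"
      unfolding group_rank_def less_SUP_iff by blast
    then show ?thesis using Suc by auto
  qed
qed

lemma finite_sub_chain:
  assumes "finite F" and mono: "\<And>K. A K \<subseteq> A (Suc K)"
  shows "F \<subseteq> (\<Union>K. A K) \<Longrightarrow> \<exists>K. F \<subseteq> A K"
  using assms(1)
proof (induction F rule: finite_induct)
  case empty then show ?case by blast
next
  case (insert a F)
  then obtain K1 where K1: "F \<subseteq> A K1" by blast
  obtain K2 where K2: "a \<in> A K2" using insert.prems by blast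
  have m: "A K \<subseteq> A K'" if "K \<le> K'" for K K' by (rule lift_Suc_mono_le[of A, OF mono that])
  have "insert a F \<subseteq> A (max K1 K2)" using K1 K2 m[of K1 "max K1 K2"] m[of K2 "max K1 K2"] by auto
  then show ?case by blast
qed

lemma int_span_chain:
  assumes S: "finite S" "S \<subseteq> int_span (\<Union>K. A K)" and mono: "\<And>K. A K \<subseteq> A (Suc K)"
  shows "\<exists>K. S \<subseteq> int_span (A K)"
proof -
  have "S \<subseteq> (\<Union>K. int_span (A K))"
  proof
    fix s assume "s \<in> S"
    then obtain F cf where F: "finite F" "F \<subseteq> (\<Union>K. A K)" and s: "s = (\<Sum>x\<in>F. of_int (cf x) *\<^sub>R x)"
      using S(2) unfolding int_span_def by blast
    obtain K where "F \<subseteq> A K" using finite_sub_chain[OF F(1) mono F(2)] by blast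
    then have "s \<in> int_span (A K)" unfolding int_span_def s using F(1) by blast
    then show "s \<in> (\<Union>K. int_span (A K))" by blast
  qed
  moreover have "int_span (A K) \<subseteq> int_span (A (Suc K))" for K by (rule int_span_mono[OF mono])
  ultimately show ?thesis using finite_sub_chain[of S "\<lambda>K. int_span (A K)", OF S(1)] by blast
qed

lemma sets_coord:
  assumes l: "l \<ge> 1"
  shows "{x \<in> space (SigmaM N). x (int l) = v} \<in> sets (SigmaM N)"
proof -
  have m: "(\<lambda>x. x (int l)) \<in> measurable (SigmaM N) (count_space {1..N})"
    unfolding SigmaM_def using l by (intro measurable_component_singleton) auto
  have "{x \<in> space (SigmaM N). x (int l) = v} = (\<lambda>x. x (int l)) -` ({v} \<inter> {1..N}) \<inter> space (SigmaM N)"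
    using l unfolding space_SigmaM by auto
  also have "\<dots> \<in> sets (SigmaM N)" by (rule measurable_sets[OF m]) auto
  finally show ?thesis .
qed

lemma sets_coords:
  "{x \<in> space (SigmaM N). \<forall>l\<in>{1..K}. x (int l) = v l} \<in> sets (SigmaM N)"
proof (induction K)
  case 0 then show ?case by (simp del: space_SigmaM)
next
  case (Suc K)
  have "{x \<in> space (SigmaM N). \<forall>l\<in>{1..Suc K}. x (int l) = v l} =
     {x \<in> space (SigmaM N). \<forall>l\<in>{1..K}. x (int l) = v l} \<inter> {x \<in> space (SigmaM N). x (int (Suc K)) = v (Suc K)}"
  proof -
    have e: "{1..Suc K} = insert (Suc K) {1..K}" by auto
    show ?thesis unfolding e by auto
  qed
  also have "\<dots> \<in> sets (SigmaM N)" by (rule sets.Int[OF Suc sets_coord]) simp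
  finally show ?case .
qed

lemma sets_dep:
  assumes dep: "\<And>x y. x \<in> space (SigmaM N) \<Longrightarrow> y \<in> space (SigmaM N) \<Longrightarrow>
      (\<forall>l\<in>{1..K}. x (int l) = y (int l)) \<Longrightarrow> P x = P y"
  shows "{x \<in> space (SigmaM N). P x} \<in> sets (SigmaM N)"
proof -
  define r where "r x = restrict (\<lambda>l. x (int l)) {1..K}" for x :: "int \<Rightarrow> nat"
  define Q where "Q v = {x \<in> space (SigmaM N). \<forall>l\<in>{1..K}. x (int l) = v l}" for v
  define W where "W = r ` {x \<in> space (SigmaM N). P x}"
  have "W \<subseteq> PiE {1..K} (\<lambda>_. {1..N})"
    unfolding W_def r_def space_SigmaM by (auto simp: PiE_def Pi_def)
  then have fW: "finite W" by (rule finite_subset) (intro finite_PiE; simp)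
  have eq: "{x \<in> space (SigmaM N). P x} = (\<Union>v\<in>W. Q v)"
  proof (intro set_eqI iffI)
    fix x assume "x \<in> {x \<in> space (SigmaM N). P x}"
    moreover then have "x \<in> Q (r x)" unfolding Q_def r_def by auto
    ultimately show "x \<in> (\<Union>v\<in>W. Q v)" unfolding W_def by blast
  next
    fix x assume "x \<in> (\<Union>v\<in>W. Q v)"
    then obtain y where y: "y \<in> space (SigmaM N)" "P y" and x: "x \<in> Q (r y)" unfolding W_def by blast
    then have "x \<in> space (SigmaM N)" "\<forall>l\<in>{1..K}. x (int l) = y (int l)" unfolding Q_def r_def by auto
    then show "x \<in> {x \<in> space (SigmaM N). P x}" using dep[OF _ y(1)] y(2) by blast
  qed
  have "(\<Union>v\<in>W. Q v) \<in> sets (SigmaM N)"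
    using fW unfolding Q_def by (intro sets.finite_UN sets_coords)
  then show ?thesis unfolding eq .
qed

lemma shiftS_pos: "shiftS x (int (Suc k)) = x (int (Suc (Suc k)))"
  unfolding shiftS_def by simp

lemma shiftS_1: "shiftS x 1 = x 2"
  using shiftS_pos[of x 0] by simp

lemma shiftS_valid: "valid N x \<Longrightarrow> valid N (shiftS x)"
  unfolding valid_def shiftS_def by auto

lemma Theta_shift: "Theta th x (Suc k) = th (x 1) * Theta th (shiftS x) k"
proof (induction k)
  case 0 then show ?case using Theta_Suc[of th x 0] by simp
next
  case (Suc k)
  have "Theta th x (Suc (Suc k)) = Theta th x (Suc k) * th (x (int (Suc (Suc k))))" by (rule Theta_Suc)
  also have "\<dots> = th (x 1) * (Theta th (shiftS x) k * th (shiftS x (int (Suc k))))"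
    unfolding Suc shiftS_pos by simp
  also have "\<dots> = th (x 1) * Theta th (shiftS x) (Suc k)" using Theta_Suc[of th "shiftS x" k] by simp
  finally show ?case .
qed

lemma Theta_dep: "(\<forall>l\<in>{1..k}. x (int l) = y (int l)) \<Longrightarrow> Theta th x k = Theta th y k"
  unfolding Theta_def by (intro prod.cong) auto

context TS begin

lemma ST_dep: "(\<forall>l\<in>{1..k}. x (int l) = y (int l)) \<Longrightarrow> ST x k i = ST y k i"
proof (induction k arbitrary: i)
  case 0 then show ?case by simp
next
  case (Suc k)
  have IH: "ST x k j = ST y k j" for j using Suc by auto
  have T: "Theta th x (Suc k) = Theta th y (Suc k)" using Suc.prems by (rule Theta_dep)
  have "Suc k \<in> {1..Suc k}" by simp
  then have X: "x (int (Suc k)) = y (int (Suc k))" using Suc.prems by blast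
  show ?case by (simp only: supertile.simps IH T X)
qed

definition RK where "RK x K = (\<Union>k\<in>{..K}. \<Union>i\<in>{1..M}. Ret (ST x k i))"

lemma Rx_RK: "Rx x = (\<Union>K. RK x K)"
  unfolding Rx_def RK_def by blast

lemma RK_mono: "RK x K \<subseteq> RK x (Suc K)"
  unfolding RK_def by (rule UN_mono) auto

lemma RK_dep: "(\<forall>l\<in>{1..K}. x (int l) = y (int l)) \<Longrightarrow> RK x K = RK y K"
proof -
  assume a: "\<forall>l\<in>{1..K}. x (int l) = y (int l)"
  have eq: "ST x k i = ST y k i" if "k \<le> K" for k i using a that by (intro ST_dep) auto
  show ?thesis unfolding RK_def by (intro SUP_cong refl) (simp add: eq)
qed

definition gr where "gr x = group_rank (int_span (Rx x))"

lemma gr_ge: "enat c \<le> gr x \<longleftrightarrow> (\<exists>K. \<exists>S. finite S \<and> S \<subseteq> int_span (RK x K) \<and> int_indep S \<and> c \<le> card S)"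
proof
  assume "enat c \<le> gr x"
  then obtain S where S: "finite S" "S \<subseteq> int_span (Rx x)" "int_indep S" "c \<le> card S"
    unfolding gr_def rank_ge_iff by blast
  obtain K where "S \<subseteq> int_span (RK x K)" using int_span_chain[OF S(1) S(2)[unfolded Rx_RK] RK_mono] by blast
  then show "\<exists>K. \<exists>S. finite S \<and> S \<subseteq> int_span (RK x K) \<and> int_indep S \<and> c \<le> card S" using S by blast
next
  assume "\<exists>K. \<exists>S. finite S \<and> S \<subseteq> int_span (RK x K) \<and> int_indep S \<and> c \<le> card S"
  then obtain K S where S: "finite S" "S \<subseteq> int_span (RK x K)" "int_indep S" "c \<le> card S" by blast
  have "int_span (RK x K) \<subseteq> int_span (Rx x)" unfolding Rx_RK by (intro int_span_mono) blast
  then show "enat c \<le> gr x" unfolding gr_def rank_ge_iff using S by blast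
qed

lemma gr_sets: "{x \<in> space (SigmaM N). enat c \<le> gr x} \<in> sets (SigmaM N)"
proof -
  have "{x \<in> space (SigmaM N). enat c \<le> gr x} =
      (\<Union>K. {x \<in> space (SigmaM N). \<exists>S. finite S \<and> S \<subseteq> int_span (RK x K) \<and> int_indep S \<and> c \<le> card S})"
    unfolding gr_ge by blast
  also have "\<dots> \<in> sets (SigmaM N)"
  proof (rule sets.countable_UN'')
    fix K :: nat
    show "{x \<in> space (SigmaM N). \<exists>S. finite S \<and> S \<subseteq> int_span (RK x K) \<and> int_indep S \<and> c \<le> card S}
       \<in> sets (SigmaM N)"
    proof (rule sets_dep)
      fix x y :: "int \<Rightarrow> nat" assume "\<forall>l\<in>{1..K}. x (int l) = y (int l)"
      then have "RK x K = RK y K" by (rule RK_dep)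
      then show "(\<exists>S. finite S \<and> S \<subseteq> int_span (RK x K) \<and> int_indep S \<and> c \<le> card S) =
               (\<exists>S. finite S \<and> S \<subseteq> int_span (RK y K) \<and> int_indep S \<and> c \<le> card S)"
        by simp
    qed
  qed simp
  finally show ?thesis .
qed

lemma ST_shift:
  "(j, v) \<in> ST (shiftS x) k i \<Longrightarrow> (j', w) \<in> ST x 1 j \<Longrightarrow>
    (j', w + (1 / th (x 1)) *\<^sub>R v) \<in> ST x (Suc k) i"
proof (induction k arbitrary: i j v)
  case 0 then show ?case by simp
next
  case (Suc k)
  let ?l = "shiftS x (int (Suc k))"
  from Suc.prems(1) obtain j1 q p0 where j1: "j1 \<in> {1..M}" and q: "q < ka ?l i j1"
    and p0: "p0 \<in> ST (shiftS x) k j1"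
    and jv: "(j, v) = (\<lambda>(m, v). (m, v + (1 / Theta th (shiftS x) (Suc k)) *\<^sub>R ta ?l i j1 q)) p0"
    by (simp only: supertile.simps) blast
  obtain v0 where p0': "p0 = (j, v0)" and v: "v = v0 + (1 / Theta th (shiftS x) (Suc k)) *\<^sub>R ta ?l i j1 q"
    using jv by (cases p0) simp
  note p0 = p0[unfolded p0']
  have IH: "(j', w + (1 / th (x 1)) *\<^sub>R v0) \<in> ST x (Suc k) j1" by (rule Suc.IH[OF p0 Suc.prems(2)])
  have l: "?l = x (int (Suc (Suc k)))" by (rule shiftS_pos)
  have T: "1 / Theta th x (Suc (Suc k)) = (1 / th (x 1)) * (1 / Theta th (shiftS x) (Suc k))"
    unfolding Theta_shift[of th x "Suc k"] by simp
  have eq: "w + (1 / th (x 1)) *\<^sub>R v = (w + (1 / th (x 1)) *\<^sub>R v0) + (1 / Theta th x (Suc (Suc k))) *\<^sub>R ta (x (int (Suc (Suc k)))) i j1 q"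
    unfolding v T l by (simp add: scaleR_add_right algebra_simps)
  have "(\<lambda>(m, v). (m, v + (1 / Theta th x (Suc (Suc k))) *\<^sub>R ta (x (int (Suc (Suc k)))) i j1 q)) (j', w + (1 / th (x 1)) *\<^sub>R v0)
      \<in> ST x (Suc (Suc k)) i"
    unfolding supertile.simps(2)[of M th ka ta x "Suc k" i]
    using j1 q IH unfolding l by blast
  then show ?case unfolding eq by simp
qed

lemma ST1_nonempty:
  assumes x: "valid N x" and tne: "\<forall>j\<in>{1..M}. t j \<noteq> {}" and j: "j \<in> {1..M}"
  shows "ST x 1 j \<noteq> {}"
proof -
  have l: "x 1 \<in> {1..N}" using x unfolding valid_def by auto
  from tne j obtain y where "y \<in> t j" by blast
  then obtain j' q where j': "j' \<in> {1..M}" and q: "q < ka (x 1) j j'"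
    using t_eq[OF l j] by blast
  let ?c = "(1 / Theta th x (Suc 0)) *\<^sub>R ta (x (int (Suc 0))) j j' q"
  have "(\<lambda>(m, v). (m, v + ?c)) (j', 0) \<in> (\<lambda>(m, v). (m, v + ?c)) ` ST x 0 j'"
    by (rule imageI) simp
  then have "(j', 0 + ?c) \<in> ST x (Suc 0) j"
    unfolding supertile.simps(2)[of M th ka ta x 0 j] using j' q by auto
  then have "(j', ?c) \<in> ST x 1 j" by simp
  then show ?thesis by blast
qed

lemma Rx_shift:
  assumes x: "valid N x" and tne: "\<forall>j\<in>{1..M}. t j \<noteq> {}"
  shows "(*\<^sub>R) (1 / th (x 1)) ` Rx (shiftS x) \<subseteq> Rx x"
proof
  fix z assume "z \<in> (*\<^sub>R) (1 / th (x 1)) ` Rx (shiftS x)"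
  then obtain u k i where i: "i \<in> {1..M}" and u: "u \<in> Ret (ST (shiftS x) k i)" and z: "z = (1 / th (x 1)) *\<^sub>R u"
    unfolding Rx_def by blast
  from u obtain j v where p1: "(j, v) \<in> ST (shiftS x) k i" and p2: "(j, v + u) \<in> ST (shiftS x) k i"
    unfolding Ret_def by blast
  have j: "j \<in> {1..M}" using ST_types[OF i p1] by simp
  obtain p where "p \<in> ST x 1 j" using ST1_nonempty[OF x tne j] by blast
  then obtain j' w where jw: "(j', w) \<in> ST x 1 j" by (cases p) blast
  have "(j', w + (1 / th (x 1)) *\<^sub>R v) \<in> ST x (Suc k) i" by (rule ST_shift[OF p1 jw])
  moreover have "(j', w + (1 / th (x 1)) *\<^sub>R (v + u)) \<in> ST x (Suc k) i" by (rule ST_shift[OF p2 jw])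
  moreover have "w + (1 / th (x 1)) *\<^sub>R (v + u) = (w + (1 / th (x 1)) *\<^sub>R v) + z"
    unfolding z by (simp add: scaleR_add_right)
  ultimately have "(j', w + (1 / th (x 1)) *\<^sub>R v) \<in> ST x (Suc k) i"
     "(j', (w + (1 / th (x 1)) *\<^sub>R v) + z) \<in> ST x (Suc k) i" by simp_all
  then have "z \<in> Ret (ST x (Suc k) i)" unfolding Ret_def by blast
  then show "z \<in> Rx x" unfolding Rx_def using i by blast
qed

lemma gr_shift:
  assumes x: "valid N x" and tne: "\<forall>j\<in>{1..M}. t j \<noteq> {}"
  shows "gr (shiftS x) \<le> gr x"
proof -
  have "x 1 \<in> {1..N}" using x unfolding valid_def by auto
  then have "0 < th (x 1)" by (rule th_pos)
  then have "1 / th (x 1) \<noteq> 0" by simp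
  then show ?thesis unfolding gr_def by (rule rank_scale[OF _ Rx_shift[OF x tne]])
qed

end

(* ---- Part7 ---- *)

lemma Baire_UNIV:
  fixes G :: "'a::euclidean_space set set"
  assumes "countable G" "\<And>T. T \<in> G \<Longrightarrow> closed T \<and> interior T = {}"
  shows "\<Union>G \<noteq> UNIV"
  using Baire_category_alt[of euclidean G] completely_metrizable_space_euclidean assms by force

context TS begin

lemma t_nonempty_path:
  assumes tj0: "t j0 \<noteq> {}"
  shows "set L \<subseteq> {1..N} \<Longrightarrow> j \<in> {1..M} \<Longrightarrow> 0 < mprod M ka L j j0 \<Longrightarrow> t j \<noteq> {}"
proof (induction L arbitrary: j)
  case Nil then show ?case using tj0 by (simp split: if_splits)
next
  case (Cons l L)
  from mprod_pos_split[OF Cons.prems(3)] obtain m where m: "m \<in> {1..M}" "0 < ka l j m"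
    and mp: "0 < mprod M ka L m j0" by blast
  have "t m \<noteq> {}" using Cons.IH[OF _ m(1) mp] Cons.prems(1) by simp
  then obtain y where y: "y \<in> t m" by blast
  have l: "l \<in> {1..N}" using Cons.prems(1) by simp
  have "th l *\<^sub>R y + ta l j m 0 \<in> t j" using t_eq[OF l Cons.prems(2)] m y by blast
  then show ?case by blast
qed

lemma Omega_empty_no_interior:
  assumes noint: "\<forall>j\<in>{1..M}. interior (t j) = {}"
  shows "Omega M t th ka ta x = {}"
proof (rule ccontr)
  assume "Omega M t th ka ta x \<noteq> {}"
  then obtain T where T: "T \<in> Omega M t th ka ta x" by blast
  from T obtain tp w where tp: "\<forall>k. tp k \<in> {1..M}"
    and TT: "T = (\<Union>k. translate_patch (w k) (ST x k (tp k)))"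
    and cov: "(\<Union>p\<in>T. tile_set t p) = UNIV"
    unfolding Omega_def by blast
  have fin: "finite (translate_patch (w k) (ST x k (tp k)))" for k
    unfolding translate_patch_def by (rule finite_imageI[OF ST_finite])
  have cT: "countable T" unfolding TT
  proof (rule countable_UN)
    show "countable (UNIV :: nat set)" by simp
  next
    fix k show "countable (translate_patch (w k) (ST x k (tp k)))" by (rule countable_finite[OF fin])
  qed
  have types: "fst p \<in> {1..M}" if "p \<in> T" for p
  proof -
    from that obtain k q where q: "q \<in> ST x k (tp k)" "p = (\<lambda>(j, v). (j, v + w k)) q"
      unfolding TT translate_patch_def by blast
    have "fst q \<in> {1..M}" using ST_types[OF tp[rule_format] q(1)] .
    then show ?thesis using q(2) by (cases q) simp
  qed
  have "\<Union>(tile_set t ` T) \<noteq> UNIV"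
  proof (rule Baire_UNIV)
    show "countable (tile_set t ` T)" using cT by simp
    fix S assume "S \<in> tile_set t ` T"
    then obtain p where p: "p \<in> T" "S = tile_set t p" by blast
    have "compact (t (fst p))" using t_compact types[OF p(1)] by blast
    then have "compact S" unfolding p(2) tile_set_def by (rule compact_translation)
    moreover have "interior S = {}"
      unfolding p(2) tile_set_def interior_translation using noint types[OF p(1)] by simp
    ultimately show "closed S \<and> interior S = {}" by (simp add: compact_imp_closed)
  qed
  then show False using cov by simp
qed

end

theorem corollary3:
  fixes t :: "nat \<Rightarrow> 'a::euclidean_space set"
    and th :: "nat \<Rightarrow> real"
    and ka :: "nat \<Rightarrow> nat \<Rightarrow> nat \<Rightarrow> nat"
    and ta :: "nat \<Rightarrow> nat \<Rightarrow> nat \<Rightarrow> nat \<Rightarrow> 'a"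
    and M N :: nat
    and \<mu> :: "(int \<Rightarrow> nat) measure"
  assumes rules: "subst_rules M N t th ka ta"
    and compat: "compatible M N t th ka ta"
    and prob: "prob_space \<mu>"
    and sets_mu: "sets \<mu> = sets (SigmaM N)"
    and shift_meas: "shiftS \<in> \<mu> \<rightarrow>\<^sub>M \<mu>"
    and invariant: "distr \<mu> \<mu> shiftS = \<mu>"
    and ergodic: "ergodic_shift \<mu>"
    and minimal: "minimal_measure M ka \<mu>"
  shows "\<exists>r. AE x in \<mu>. rank_x M t th ka ta x = r"
proof -
  interpret TS M N t th ka ta by (rule TS.intro[OF rules])
  interpret P: prob_space \<mu> by (rule prob)
  have sp: "space \<mu> = space (SigmaM N)" using sets_mu by (rule sets_eq_imp_space_eq)
  define Mn where "Mn x \<longleftrightarrow> (\<forall>m. m \<noteq> 0 \<longrightarrow>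
        (\<exists>n. n \<noteq> 0 \<and> n > m \<and> (\<forall>i\<in>{1..M}. \<forall>j\<in>{1..M}. prod_seg M ka x n m i j > 0)))" for x
  have aeMn: "AE x in \<mu>. Mn x" using minimal unfolding minimal_measure_def Mn_def .
  show ?thesis
  proof (cases "\<exists>j0\<in>{1..M}. interior (t j0) \<noteq> {}")
    case False
    then have "Omega M t th ka ta x = {}" for x using Omega_empty_no_interior by blast
    then have "rank_x M t th ka ta x = group_rank (int_span ({} :: 'a set))" for x
      unfolding rank_x_def Lambda_def by simp
    then show ?thesis by auto
  next
    case True
    then obtain j0 where j0: "j0 \<in> {1..M}" and int: "interior (t j0) \<noteq> {}" by blast
    then obtain a where "a \<in> interior (t j0)" by blast
    then obtain e where e: "0 < e" "ball a e \<subseteq> t j0" by (meson mem_interior)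
    define \<epsilon> where "\<epsilon> = e / 2"
    have ep: "0 < \<epsilon>" unfolding \<epsilon>_def using e by simp
    have ball: "cball a \<epsilon> \<subseteq> t j0" using e unfolding \<epsilon>_def by (auto simp: subset_eq)
    have "bounded (\<Union>j\<in>{1..M}. t j)" using t_compact by (intro bounded_UN) (auto intro: compact_imp_bounded)
    then obtain D where D0: "\<forall>y\<in>(\<Union>j\<in>{1..M}. t j). norm y \<le> D" unfolding bounded_iff by blast
    have D: "\<forall>j\<in>{1..M}. t j \<subseteq> cball 0 D" using D0 by auto
    have "\<exists>x\<in>space \<mu>. Mn x"
    proof (rule ccontr)
      assume "\<not> ?thesis"
      then have "AE x in \<mu>. False" using aeMn by (auto elim: AE_mp intro: AE_I2)
      then show False by (simp add: P.AE_False)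
    qed
    then obtain x0 where x0: "x0 \<in> space \<mu>" "Mn x0" by blast
    have vx0: "valid N x0" using x0(1) sp valid_space by auto
    have np0: "npos x0" using x0(2) unfolding Mn_def by (rule npos_of_minimal)
    have tne: "\<forall>j\<in>{1..M}. t j \<noteq> {}"
    proof
      fix j assume j: "j \<in> {1..M}"
      from np0 obtain d where d: "\<forall>i\<in>{1..M}. \<forall>j\<in>{1..M}.
          0 < mprod M ka (map (\<lambda>l. x0 (int l)) (rev [Suc 0..<Suc (0 + d)])) i j"
        unfolding npos_def by blast
      have "set (map (\<lambda>l. x0 (int l)) (rev [Suc 0..<Suc (0 + d)])) \<subseteq> {1..N}"
        using vx0 unfolding valid_def by auto
      moreover have "t j0 \<noteq> {}" using int interior_subset by blast
      ultimately show "t j \<noteq> {}" using t_nonempty_path[of j0] d j j0 by blast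
    qed
    have good: "rank_x M t th ka ta x = gr x" if "x \<in> space \<mu>" "Mn x" for x
    proof -
      have vx: "valid N x" using that(1) sp valid_space by auto
      have np: "npos x" using that(2) unfolding Mn_def by (rule npos_of_minimal)
      have "Lambda M t th ka ta x = Rx x"
        by (rule Lambda_eq_Rx[OF vx np Omega_nonempty[OF vx np j0 ep ball D]])
      then show ?thesis unfolding rank_x_def gr_def by simp
    qed
    have "\<exists>r. AE x in \<mu>. gr x = r"
    proof (rule ergodic_const[OF prob shift_meas invariant ergodic])
      fix c :: nat
      show "{x \<in> space \<mu>. enat c \<le> gr x} \<in> sets \<mu>" unfolding sp sets_mu by (rule gr_sets)
    next
      fix x assume "x \<in> space \<mu>"
      then have "valid N x" using sp valid_space by auto
      then show "gr (shiftS x) \<le> gr x" by (rule gr_shift[OF _ tne])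
    qed
    then obtain r where r: "AE x in \<mu>. gr x = r" by blast
    have "AE x in \<mu>. rank_x M t th ka ta x = r"
      using r aeMn AE_space
    proof eventually_elim
      case (elim x) then show ?case using good by simp
    qed
    then show ?thesis by blast
  qed
qed


end
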